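(* Let $X$ be a complex Banach space and $\{U_h\}\in C_b((0,1],B(X))$. Then $\{U_h\}$ is an asymptotic quasinilpotent operator, i.e. $\lim_{n\to\infty}\big(\limsup_{h\to0}\|U_h^n\|\big)^{1/n}=0$, if and only if $Sp(\{U_h\})=\{0\}$.
   Context: $B(X)$ is the algebra of bounded linear operators on $X$. $C_b((0,1],B(X))$ denotes the set of families $\{T_h\}_{h\in(0,1]}\subset B(X)$ with $\sup_h\|T_h\|<\infty$. The resolvent set of $\{U_h\}$ is $r(\{U_h\})=\{\lambda\in\mathbb{C}:\ \exists\{\mathcal{R}(\lambda,U_h)\}\in C_b((0,1],B(X))$ with $\lim_{h\to0}\|(\lambda I-U_h)\mathcal{R}(\lambda,U_h)-I\|=\lim_{h\to0}\|\mathcal{R}(\lambda,U_h)(\lambda I-U_h)-I\|=0\}$, and the spectrum is $Sp(\{U_h\})=\mathbb{C}\setminus r(\{U_h\})$. *)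

theory Defs
  imports "HOL-Analysis.Analysis"
begin

text \<open>HOL-Analysis has no complex vector spaces, so a complex normed space is a real
normed space with a compatible complex scalar multiplication.\<close>

class complex_normed_vector = real_normed_vector +
  fixes scaleC :: "complex \<Rightarrow> 'a \<Rightarrow> 'a" (infixr "*\<^sub>C" 75)
  assumes scaleC_add_right: "a *\<^sub>C (x + y) = a *\<^sub>C x + a *\<^sub>C y"
    and scaleC_add_left: "(a + b) *\<^sub>C x = a *\<^sub>C x + b *\<^sub>C x"
    and scaleC_scaleC: "a *\<^sub>C (b *\<^sub>C x) = (a * b) *\<^sub>C x"
    and scaleC_one: "1 *\<^sub>C x = x"
    and scaleR_scaleC: "r *\<^sub>R x = complex_of_real r *\<^sub>C x"
    and norm_scaleC: "norm (a *\<^sub>C x) = cmod a * norm x"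

class complex_banach = complex_normed_vector + banach

definition bop :: "('a::complex_normed_vector \<Rightarrow> 'a) \<Rightarrow> bool" where
  "bop T \<longleftrightarrow> bounded_linear T \<and> (\<forall>c x. T (c *\<^sub>C x) = c *\<^sub>C T x)"

text \<open>C_b((0,1],B(X)): families h \<mapsto> T h, h in (0,1], of operators in B(X) with
  sup_h norm (T h) < infinity (values for h outside (0,1] are irrelevant).\<close>
definition Cb :: "(real \<Rightarrow> 'a::complex_normed_vector \<Rightarrow> 'a) \<Rightarrow> bool" where
  "Cb T \<longleftrightarrow> (\<forall>h\<in>{0<..1}. bop (T h)) \<and> bdd_above ((\<lambda>h. onorm (T h)) ` {0<..1})"

definition asymp_resolvent_set :: "(real \<Rightarrow> 'a::complex_normed_vector \<Rightarrow> 'a) \<Rightarrow> complex set" where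
  "asymp_resolvent_set U = {l. \<exists>R. Cb R \<and>
     ((\<lambda>h. onorm (\<lambda>x. (l *\<^sub>C R h x - U h (R h x)) - x)) \<longlongrightarrow> 0) (at_right 0) \<and>
     ((\<lambda>h. onorm (\<lambda>x. R h (l *\<^sub>C x - U h x) - x)) \<longlongrightarrow> 0) (at_right 0)}"

definition asymp_spectrum :: "(real \<Rightarrow> 'a::complex_normed_vector \<Rightarrow> 'a) \<Rightarrow> complex set" where
  "asymp_spectrum U = UNIV - asymp_resolvent_set U"

definition asymp_quasinilpotent :: "(real \<Rightarrow> 'a::complex_normed_vector \<Rightarrow> 'a) \<Rightarrow> bool" where
  "asymp_quasinilpotent U \<longleftrightarrow>
     (\<lambda>n. root n (real_of_ereal (Limsup (at_right 0) (\<lambda>h. ereal (onorm (U h ^^ n))))))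
       \<longlonglongrightarrow> 0"

end

theory Submission
  imports Defs
begin

section \<open>Complex scalar multiplication\<close>

lemma scaleC_zero_right[simp]: "c *\<^sub>C (0::'a::complex_normed_vector) = 0"
  using scaleC_add_right[of c "0::'a" 0] by simp

lemma scaleC_zero_left[simp]: "(0::complex) *\<^sub>C (x::'a::complex_normed_vector) = 0"
  using scaleR_scaleC[of 0 x] by simp

lemma scaleC_minus_right: "c *\<^sub>C (- x) = - (c *\<^sub>C (x::'a::complex_normed_vector))"
  using scaleC_add_right[of c "-x" x] by (simp add: eq_neg_iff_add_eq_0)

lemma scaleC_diff_right: "c *\<^sub>C (x - y) = c *\<^sub>C x - c *\<^sub>C (y::'a::complex_normed_vector)"
  unfolding diff_conv_add_uminus by (simp only: scaleC_add_right scaleC_minus_right)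

lemma scaleC_minus_left: "(- c) *\<^sub>C x = - (c *\<^sub>C (x::'a::complex_normed_vector))"
  using scaleC_add_left[of "-c" c x] by (simp add: eq_neg_iff_add_eq_0)

lemma scaleC_diff_left: "(c - d) *\<^sub>C x = c *\<^sub>C x - d *\<^sub>C (x::'a::complex_normed_vector)"
  unfolding diff_conv_add_uminus by (simp only: scaleC_add_left scaleC_minus_left)

lemma scaleC_sum_right: "c *\<^sub>C (\<Sum>i\<in>A. f i) = (\<Sum>i\<in>A. c *\<^sub>C (f i::'a::complex_normed_vector))"
  by (induction A rule: infinite_finite_induct) (simp_all add: scaleC_add_right)

lemma scaleC_sum_left: "(\<Sum>i\<in>A. f i) *\<^sub>C x = (\<Sum>i\<in>A. f i *\<^sub>C (x::'a::complex_normed_vector))"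
  by (induction A rule: infinite_finite_induct) (simp_all add: scaleC_add_left)

lemma scaleC_commute: "c *\<^sub>C (d *\<^sub>C x) = d *\<^sub>C (c *\<^sub>C (x::'a::complex_normed_vector))"
  by (simp add: scaleC_scaleC mult.commute)

lemma bounded_linear_scaleC: "bounded_linear (\<lambda>x::'a::complex_normed_vector. c *\<^sub>C x)"
proof (rule bounded_linear_intro[where K="cmod c"])
  fix x y :: 'a show "c *\<^sub>C (x + y) = c *\<^sub>C x + c *\<^sub>C y" by (rule scaleC_add_right)
next
  fix r and x :: 'a show "c *\<^sub>C (r *\<^sub>R x) = r *\<^sub>R (c *\<^sub>C x)"
    by (simp add: scaleR_scaleC scaleC_commute)
next
  fix x :: 'a show "norm (c *\<^sub>C x) \<le> norm x * cmod c" by (simp add: norm_scaleC)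
qed

section \<open>Bounded complex-linear operators\<close>

lemma bopD1: "bop T \<Longrightarrow> bounded_linear T" by (simp add: bop_def)
lemma bopD2: "bop T \<Longrightarrow> T (c *\<^sub>C x) = c *\<^sub>C T x" by (simp add: bop_def)

lemma bop_add_ap: "bop T \<Longrightarrow> T (x + y) = T x + T y"
  using bopD1 bounded_linear.linear linear_add by blast
lemma bop_diff_ap: "bop T \<Longrightarrow> T (x - y) = T x - T y"
  using bopD1 bounded_linear.linear linear_diff by blast
lemma bop_minus_ap: "bop T \<Longrightarrow> T (- x) = - T x"
  using bopD1 bounded_linear.linear linear_neg by blast
lemma bop_zero_ap: "bop T \<Longrightarrow> T 0 = 0"
  using bopD1 bounded_linear.linear linear_0 by blast
lemma bop_sum_ap: "bop T \<Longrightarrow> T (\<Sum>i\<in>A. f i) = (\<Sum>i\<in>A. T (f i))"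
  by (induction A rule: infinite_finite_induct) (simp_all add: bop_zero_ap bop_add_ap)

lemma bop_id: "bop (\<lambda>x. x)" by (simp add: bop_def bounded_linear_ident)
lemma bop_zero: "bop (\<lambda>x. 0)" by (simp add: bop_def bounded_linear_zero)

lemma bop_comp: "bop S \<Longrightarrow> bop T \<Longrightarrow> bop (\<lambda>x. S (T x))"
  unfolding bop_def using bounded_linear_compose[of S T] by (auto simp: o_def)

lemma bop_add: "bop S \<Longrightarrow> bop T \<Longrightarrow> bop (\<lambda>x. S x + T x)"
  unfolding bop_def by (auto intro: bounded_linear_add simp: scaleC_add_right)

lemma bop_diff: "bop S \<Longrightarrow> bop T \<Longrightarrow> bop (\<lambda>x. S x - T x)"
  unfolding bop_def by (auto intro: bounded_linear_sub simp: scaleC_diff_right)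

lemma bop_scale: "bop T \<Longrightarrow> bop (\<lambda>x. c *\<^sub>C T x)"
  unfolding bop_def using bounded_linear_compose[OF bounded_linear_scaleC[of c], of T]
  by (auto simp: o_def scaleC_commute)

lemma bop_sum: "(\<And>i. i \<in> A \<Longrightarrow> bop (T i)) \<Longrightarrow> bop (\<lambda>x. \<Sum>i\<in>A. T i x)"
proof (induction A rule: infinite_finite_induct)
  case (insert a F) then show ?case by (simp add: bop_add)
qed (simp_all add: bop_zero)

lemma bop_pow: "bop T \<Longrightarrow> bop (T ^^ n)"
proof (induction n)
  case 0 then show ?case using bop_id by (simp add: id_def)
next
  case (Suc n) then show ?case using bop_comp[of T "T^^n"] by (simp add: o_def)
qed

lemma onorm_comp': "bounded_linear f \<Longrightarrow> bounded_linear g \<Longrightarrow> onorm (\<lambda>x. f (g x)) \<le> onorm f * onorm g"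
  using onorm_compose[of f g] by (simp add: o_def)

lemma onorm_pow: "bop T \<Longrightarrow> onorm (T ^^ n) \<le> onorm T ^ n"
proof (induction n)
  case 0 then show ?case using onorm_id_le by (simp add: id_def)
next
  case (Suc n)
  have "onorm (T ^^ Suc n) = onorm (\<lambda>x. T ((T^^n) x))" by (simp add: o_def)
  also have "\<dots> \<le> onorm T * onorm (T ^^ n)"
    using onorm_comp' bopD1[OF Suc.prems] bopD1[OF bop_pow[OF Suc.prems]] by blast
  also have "\<dots> \<le> onorm T * onorm T ^ n"
    using Suc.IH[OF Suc.prems] onorm_pos_le[OF bopD1[OF Suc.prems]] by (rule mult_left_mono)
  finally show ?case by (simp only: power_Suc)
qed

lemma onorm_scaleC_le: "bounded_linear T \<Longrightarrow> onorm (\<lambda>x. c *\<^sub>C T x) \<le> cmod c * onorm T"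
proof (intro onorm_bound)
  fix x assume "bounded_linear T"
  then show "0 \<le> cmod c * onorm T" by (simp add: onorm_pos_le)
  fix x assume "bounded_linear T"
  then show "norm (c *\<^sub>C T x) \<le> cmod c * onorm T * norm x"
    using onorm[of T x] by (simp add: norm_scaleC mult_left_mono mult.assoc)
qed

lemma onorm_pt: "bop T \<Longrightarrow> norm (T x) \<le> onorm T * norm x"
  using onorm bopD1 by blast


section \<open>Families and the asymptotic seminorm\<close>

definition fam :: "(real \<Rightarrow> 'a::complex_normed_vector \<Rightarrow> 'a) \<Rightarrow> bool" where
  "fam F \<longleftrightarrow> eventually (\<lambda>h. bop (F h)) (at_right 0) \<and> (\<exists>c. eventually (\<lambda>h. onorm (F h) \<le> c) (at_right 0))"

definition pn :: "(real \<Rightarrow> 'a::complex_normed_vector \<Rightarrow> 'a) \<Rightarrow> real" where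
  "pn F = real_of_ereal (Limsup (at_right (0::real)) (\<lambda>h. ereal (onorm (F h))))"

lemma ev01: "eventually (\<lambda>h. h \<in> {0<..1}) (at_right (0::real))"
  by (rule eventually_at_rightI[where b=1]) auto

lemma famD1: "fam F \<Longrightarrow> eventually (\<lambda>h. bop (F h)) (at_right 0)"
  by (simp add: fam_def)

lemma fam_Limsup:
  assumes "fam F"
  shows "Limsup (at_right 0) (\<lambda>h. ereal (onorm (F h))) = ereal (pn F)" "0 \<le> pn F"
proof -
  from assms obtain c where ev: "eventually (\<lambda>h. onorm (F h) \<le> c) (at_right 0)"
    and evb: "eventually (\<lambda>h. bop (F h)) (at_right 0)" by (auto simp: fam_def)
  define L where "L = Limsup (at_right (0::real)) (\<lambda>h. ereal (onorm (F h)))"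
  have "L \<le> ereal c" unfolding L_def
    by (rule Limsup_bounded) (use ev in \<open>auto elim: eventually_mono\<close>)
  moreover have "0 \<le> L" unfolding L_def
    by (rule le_Limsup) (use evb in \<open>auto elim!: eventually_mono simp: onorm_pos_le bopD1\<close>)
  ultimately have "L = ereal (real_of_ereal L)" "0 \<le> real_of_ereal L"
    by (cases L; auto)+
  then show "Limsup (at_right 0) (\<lambda>h. ereal (onorm (F h))) = ereal (pn F)" "0 \<le> pn F"
    by (simp_all add: pn_def L_def[symmetric])
qed

lemma pn_nonneg: "fam F \<Longrightarrow> 0 \<le> pn F"
  using fam_Limsup(2) .

lemma pn_le: assumes "fam F" "eventually (\<lambda>h. onorm (F h) \<le> c) (at_right 0)" shows "pn F \<le> c"
proof -
  have "Limsup (at_right 0) (\<lambda>h. ereal (onorm (F h))) \<le> ereal c"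
    by (rule Limsup_bounded) (use assms(2) in \<open>auto elim: eventually_mono\<close>)
  then show ?thesis using fam_Limsup(1)[OF assms(1)] by simp
qed

lemma pn_ev: assumes "fam F" "0 < e" shows "eventually (\<lambda>h. onorm (F h) < pn F + e) (at_right 0)"
proof -
  have "Limsup (at_right 0) (\<lambda>h. ereal (onorm (F h))) < ereal (pn F + e)"
    using fam_Limsup(1)[OF assms(1)] assms(2) by simp
  from Limsup_lessD[OF this] show ?thesis by (auto elim: eventually_mono)
qed

lemma pn_ge: assumes "fam F" "eventually (\<lambda>h. c \<le> onorm (F h)) (at_right 0)" shows "c \<le> pn F"
proof -
  have "ereal c \<le> Limsup (at_right 0) (\<lambda>h. ereal (onorm (F h)))"
    by (rule le_Limsup) (use assms(2) in \<open>auto elim: eventually_mono\<close>)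
  then show ?thesis using fam_Limsup(1)[OF assms(1)] by simp
qed

lemma pn_null: assumes "fam F" "((\<lambda>h. onorm (F h)) \<longlongrightarrow> 0) (at_right 0)" shows "pn F = 0"
proof -
  have "pn F \<le> 0 + e" if "e > 0" for e
    using order_tendstoD(2)[OF assms(2) that] by (intro pn_le[OF assms(1)]) (auto elim: eventually_mono)
  then have "pn F \<le> 0" by (rule field_le_epsilon)
  with pn_nonneg[OF assms(1)] show ?thesis by simp
qed

lemma pn_add_le:
  assumes "fam F" "fam G" "fam H"
    and "eventually (\<lambda>h. onorm (F h) \<le> onorm (G h) + onorm (H h)) (at_right 0)"
  shows "pn F \<le> pn G + pn H"
proof (rule field_le_epsilon)
  fix e :: real assume e: "0 < e"
  have e2: "0 < e/2" using e by simp
  have "eventually (\<lambda>h. onorm (F h) \<le> pn G + pn H + e) (at_right 0)"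
    using pn_ev[OF assms(2) e2] pn_ev[OF assms(3) e2] assms(4)
    by eventually_elim auto
  then show "pn F \<le> pn G + pn H + e" by (rule pn_le[OF assms(1)])
qed

lemma pn_scale_le:
  assumes "fam F" "fam G" "0 \<le> c"
    and "eventually (\<lambda>h. onorm (F h) \<le> c * onorm (G h)) (at_right 0)"
  shows "pn F \<le> c * pn G"
proof (rule field_le_epsilon)
  fix e :: real assume e: "0 < e"
  define d where "d = e / (c + 1)"
  have d: "0 < d" "c * d \<le> e" using e assms(3) by (auto simp: d_def field_simps)
  have "eventually (\<lambda>h. onorm (F h) \<le> c * pn G + e) (at_right 0)"
    using pn_ev[OF assms(2) d(1)] assms(4)
  proof eventually_elim
    case (elim h)
    have "onorm (F h) \<le> c * (pn G + d)" using elim assms(3)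
      by (meson dual_order.trans less_le_not_le mult_left_mono)
    also have "\<dots> \<le> c * pn G + e" using d by (simp add: algebra_simps)
    finally show ?case .
  qed
  then show "pn F \<le> c * pn G + e" by (rule pn_le[OF assms(1)])
qed

lemma pn_mult_le:
  assumes "fam F" "fam G" "fam H"
    and "eventually (\<lambda>h. onorm (F h) \<le> onorm (G h) * onorm (H h)) (at_right 0)"
  shows "pn F \<le> pn G * pn H"
proof (rule field_le_epsilon)
  fix e :: real assume e: "0 < e"
  have g0: "0 \<le> pn G" and h0: "0 \<le> pn H" using pn_nonneg assms by auto
  define S where "S = pn G + pn H + 1"
  have S: "0 < S" using g0 h0 by (simp add: S_def)
  define d where "d = min 1 (e / S)"
  have d1: "0 < d" "d \<le> 1" using e S by (auto simp: d_def)
  have "d * S \<le> (e / S) * S" using S by (intro mult_right_mono) (auto simp: d_def)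
  then have d: "0 < d" "d \<le> 1" "d * (pn G + pn H + 1) \<le> e" using d1 S by (auto simp: S_def)
  have "eventually (\<lambda>h. onorm (F h) \<le> pn G * pn H + e) (at_right 0)"
    using pn_ev[OF assms(2) d(1)] pn_ev[OF assms(3) d(1)] assms(4) famD1[OF assms(2)] famD1[OF assms(3)]
  proof eventually_elim
    case (elim h)
    have "onorm (F h) \<le> (pn G + d) * (pn H + d)"
      using elim by (meson mult_mono onorm_pos_le bopD1 order.trans less_imp_le add_nonneg_nonneg g0 d(1))
    also have "\<dots> = pn G * pn H + d * (pn G + pn H + d)" by (simp add: algebra_simps)
    also have "\<dots> \<le> pn G * pn H + d * (pn G + pn H + 1)"
      using d g0 h0 by (intro add_left_mono mult_left_mono) auto
    also have "\<dots> \<le> pn G * pn H + e" using d by simp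
    finally show ?case .
  qed
  then show "pn F \<le> pn G * pn H + e" by (rule pn_le[OF assms(1)])
qed

lemma pn_sum_le:
  assumes "finite A" "fam F" "\<And>i. i \<in> A \<Longrightarrow> fam (G i)"
    and "eventually (\<lambda>h. onorm (F h) \<le> (\<Sum>i\<in>A. onorm (G i h))) (at_right 0)"
  shows "pn F \<le> (\<Sum>i\<in>A. pn (G i))"
proof (rule field_le_epsilon)
  fix e :: real assume e: "0 < e"
  define d where "d = e / (real (card A) + 1)"
  have d: "0 < d" "real (card A) * d \<le> e" using e by (auto simp: d_def field_simps)
  have "eventually (\<lambda>h. \<forall>i\<in>A. onorm (G i h) < pn (G i) + d) (at_right 0)"
    using assms(1,3) pn_ev d(1) by (intro eventually_ball_finite) auto
  then have "eventually (\<lambda>h. onorm (F h) \<le> (\<Sum>i\<in>A. pn (G i)) + e) (at_right 0)"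
    using assms(4)
  proof eventually_elim
    case (elim h)
    have "onorm (F h) \<le> (\<Sum>i\<in>A. onorm (G i h))" using elim by simp
    also have "\<dots> \<le> (\<Sum>i\<in>A. pn (G i) + d)" using elim by (intro sum_mono) auto
    also have "\<dots> = (\<Sum>i\<in>A. pn (G i)) + real (card A) * d" by (simp add: sum.distrib)
    also have "\<dots> \<le> (\<Sum>i\<in>A. pn (G i)) + e" using d by simp
    finally show ?case .
  qed
  then show "pn F \<le> (\<Sum>i\<in>A. pn (G i)) + e" by (rule pn_le[OF assms(2)])
qed


lemma onorm_diff_le: "bounded_linear f \<Longrightarrow> bounded_linear g \<Longrightarrow> onorm (\<lambda>x. f x - g x) \<le> onorm f + onorm g"
  using onorm_triangle[of f "\<lambda>x. - g x"] onorm_neg[of g] bounded_linear_minus[of g] by simp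

lemma famI: "eventually (\<lambda>h. bop (F h)) (at_right 0) \<Longrightarrow> eventually (\<lambda>h. onorm (F h) \<le> c) (at_right 0) \<Longrightarrow> fam F"
  unfolding fam_def by blast

lemma famI': "eventually (\<lambda>h. bop (F h) \<and> onorm (F h) \<le> c) (at_right 0) \<Longrightarrow> fam F"
  unfolding fam_def eventually_conj_iff by blast

lemma famE:
  assumes "fam F"
  obtains c where "0 \<le> c" "eventually (\<lambda>h. bop (F h) \<and> onorm (F h) \<le> c) (at_right 0)"
proof -
  from assms obtain c where "eventually (\<lambda>h. bop (F h)) (at_right 0)" "eventually (\<lambda>h. onorm (F h) \<le> c) (at_right 0)"
    by (auto simp: fam_def)
  then have ev: "eventually (\<lambda>h. bop (F h) \<and> onorm (F h) \<le> c) (at_right 0)" by eventually_elim auto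
  then have "eventually (\<lambda>h. 0 \<le> c) (at_right (0::real))"
    by eventually_elim (meson bopD1 onorm_pos_le order.trans)
  then have "0 \<le> c" by (simp add: eventually_const_iff)
  with ev that show ?thesis by blast
qed

lemma fam_id: "fam (\<lambda>h x. x)"
  by (rule famI[where c=1]) (auto simp: bop_id onorm_id_le)

lemma fam_zero: "fam (\<lambda>h x. 0)"
  by (rule famI[where c=0]) (auto simp: bop_zero onorm_zero)

lemma fam_add: assumes "fam F" "fam G" shows "fam (\<lambda>h x. F h x + G h x)"
proof -
  obtain c where c0: "0 \<le> c" and c: "eventually (\<lambda>h. bop (F h) \<and> onorm (F h) \<le> c) (at_right 0)"
    by (rule famE[OF assms(1)])
  obtain d where d0: "0 \<le> d" and d: "eventually (\<lambda>h. bop (G h) \<and> onorm (G h) \<le> d) (at_right 0)"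
    by (rule famE[OF assms(2)])
  from c d have "eventually (\<lambda>h. bop (\<lambda>x. F h x + G h x) \<and> onorm (\<lambda>x. F h x + G h x) \<le> c + d) (at_right 0)"
  proof eventually_elim
    case (elim h) then show ?case
      by (intro conjI bop_add onorm_triangle_le bopD1 add_mono) auto
  qed
  then show ?thesis by (rule famI')
qed

lemma fam_diff: assumes "fam F" "fam G" shows "fam (\<lambda>h x. F h x - G h x)"
proof -
  obtain c where c0: "0 \<le> c" and c: "eventually (\<lambda>h. bop (F h) \<and> onorm (F h) \<le> c) (at_right 0)"
    by (rule famE[OF assms(1)])
  obtain d where d0: "0 \<le> d" and d: "eventually (\<lambda>h. bop (G h) \<and> onorm (G h) \<le> d) (at_right 0)"
    by (rule famE[OF assms(2)])
  from c d have "eventually (\<lambda>h. bop (\<lambda>x. F h x - G h x) \<and> onorm (\<lambda>x. F h x - G h x) \<le> c + d) (at_right 0)"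
  proof eventually_elim
    case (elim h) then show ?case
      by (intro conjI bop_diff order_trans[OF onorm_diff_le add_mono] bopD1) auto
  qed
  then show ?thesis by (rule famI')
qed

lemma fam_comp: assumes "fam F" "fam G" shows "fam (\<lambda>h x. F h (G h x))"
proof -
  obtain c where c0: "0 \<le> c" and c: "eventually (\<lambda>h. bop (F h) \<and> onorm (F h) \<le> c) (at_right 0)"
    by (rule famE[OF assms(1)])
  obtain d where d0: "0 \<le> d" and d: "eventually (\<lambda>h. bop (G h) \<and> onorm (G h) \<le> d) (at_right 0)"
    by (rule famE[OF assms(2)])
  from c d have "eventually (\<lambda>h. bop (\<lambda>x. F h (G h x)) \<and> onorm (\<lambda>x. F h (G h x)) \<le> c * d) (at_right 0)"
  proof eventually_elim
    case (elim h)
    have "onorm (\<lambda>x. F h (G h x)) \<le> onorm (F h) * onorm (G h)"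
      using elim by (intro onorm_comp' bopD1) auto
    also have "\<dots> \<le> c * d" using elim c0 by (intro mult_mono onorm_pos_le bopD1) auto
    finally show ?case using elim by (simp add: bop_comp)
  qed
  then show ?thesis by (rule famI')
qed

lemma fam_scale: assumes "fam F" shows "fam (\<lambda>h x. a *\<^sub>C F h x)"
proof -
  obtain c where c0: "0 \<le> c" and c: "eventually (\<lambda>h. bop (F h) \<and> onorm (F h) \<le> c) (at_right 0)"
    by (rule famE[OF assms(1)])
  from c have "eventually (\<lambda>h. bop (\<lambda>x. a *\<^sub>C F h x) \<and> onorm (\<lambda>x. a *\<^sub>C F h x) \<le> cmod a * c) (at_right 0)"
  proof eventually_elim
    case (elim h)
    have "onorm (\<lambda>x. a *\<^sub>C F h x) \<le> cmod a * onorm (F h)" using elim by (intro onorm_scaleC_le bopD1) auto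
    also have "\<dots> \<le> cmod a * c" using elim by (simp add: mult_left_mono)
    finally show ?case using elim by (simp add: bop_scale)
  qed
  then show ?thesis by (rule famI')
qed

lemma fam_sum: "(\<And>i. i \<in> A \<Longrightarrow> fam (G i)) \<Longrightarrow> fam (\<lambda>h x. \<Sum>i\<in>A. G i h x)"
proof (induction A rule: infinite_finite_induct)
  case (insert a F)
  then show ?case using fam_add[of "G a" "\<lambda>h x. \<Sum>i\<in>F. G i h x"] by simp
qed (simp_all add: fam_zero)

lemma fam_pow: assumes "fam F" shows "fam (\<lambda>h. F h ^^ n)"
proof -
  obtain c where c0: "0 \<le> c" and c: "eventually (\<lambda>h. bop (F h) \<and> onorm (F h) \<le> c) (at_right 0)"
    by (rule famE[OF assms(1)])
  from c have "eventually (\<lambda>h. bop (F h ^^ n) \<and> onorm (F h ^^ n) \<le> c ^ n) (at_right 0)"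
  proof eventually_elim
    case (elim h)
    have "onorm (F h ^^ n) \<le> onorm (F h) ^ n" using elim by (intro onorm_pow) auto
    also have "\<dots> \<le> c ^ n" using elim by (intro power_mono onorm_pos_le bopD1) auto
    finally show ?case using elim by (simp add: bop_pow)
  qed
  then show ?thesis by (rule famI')
qed

lemma fam_cong: assumes "fam F" "eventually (\<lambda>h. F h = G h) (at_right 0)" shows "fam G"
proof -
  obtain c where "0 \<le> c" and c: "eventually (\<lambda>h. bop (F h) \<and> onorm (F h) \<le> c) (at_right 0)"
    by (rule famE[OF assms(1)])
  from c assms(2) have "eventually (\<lambda>h. bop (G h) \<and> onorm (G h) \<le> c) (at_right 0)"
    by eventually_elim simp
  then show ?thesis by (rule famI')
qed

lemma pn_cong: assumes "eventually (\<lambda>h. F h = G h) (at_right 0)" shows "pn F = pn G"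
proof -
  have 1: "eventually (\<lambda>h. ereal (onorm (F h)) \<le> ereal (onorm (G h))) (at_right 0)"
    using assms by (rule eventually_mono) simp
  have 2: "eventually (\<lambda>h. ereal (onorm (G h)) \<le> ereal (onorm (F h))) (at_right 0)"
    using assms by (rule eventually_mono) simp
  have "Limsup (at_right (0::real)) (\<lambda>h. ereal (onorm (F h))) = Limsup (at_right 0) (\<lambda>h. ereal (onorm (G h)))"
    using Limsup_mono[OF 1] Limsup_mono[OF 2] by (rule antisym)
  then show ?thesis by (simp add: pn_def)
qed

lemma fam_bop_ev: "fam F \<Longrightarrow> eventually (\<lambda>h. bop (F h)) (at_right 0)"
  by (simp add: fam_def)

lemma pn_add: assumes "fam F" "fam G" shows "pn (\<lambda>h x. F h x + G h x) \<le> pn F + pn G"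
proof (rule pn_add_le[OF fam_add[OF assms] assms])
  have "eventually (\<lambda>h. bop (F h) \<and> bop (G h)) (at_right 0)"
    using fam_bop_ev[OF assms(1)] fam_bop_ev[OF assms(2)] by (rule eventually_conj)
  then show "eventually (\<lambda>h. onorm (\<lambda>x. F h x + G h x) \<le> onorm (F h) + onorm (G h)) (at_right 0)"
    by (rule eventually_mono) (intro onorm_triangle bopD1, auto)
qed

lemma pn_diff: assumes "fam F" "fam G" shows "pn (\<lambda>h x. F h x - G h x) \<le> pn F + pn G"
proof (rule pn_add_le[OF fam_diff[OF assms] assms])
  have "eventually (\<lambda>h. bop (F h) \<and> bop (G h)) (at_right 0)"
    using fam_bop_ev[OF assms(1)] fam_bop_ev[OF assms(2)] by (rule eventually_conj)
  then show "eventually (\<lambda>h. onorm (\<lambda>x. F h x - G h x) \<le> onorm (F h) + onorm (G h)) (at_right 0)"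
    by (rule eventually_mono) (intro onorm_diff_le bopD1, auto)
qed

lemma pn_comp: assumes "fam F" "fam G" shows "pn (\<lambda>h x. F h (G h x)) \<le> pn F * pn G"
proof (rule pn_mult_le[OF fam_comp[OF assms] assms])
  have "eventually (\<lambda>h. bop (F h) \<and> bop (G h)) (at_right 0)"
    using fam_bop_ev[OF assms(1)] fam_bop_ev[OF assms(2)] by (rule eventually_conj)
  then show "eventually (\<lambda>h. onorm (\<lambda>x. F h (G h x)) \<le> onorm (F h) * onorm (G h)) (at_right 0)"
    by (rule eventually_mono) (intro onorm_comp' bopD1, auto)
qed

lemma pn_scale: assumes "fam F" shows "pn (\<lambda>h x. a *\<^sub>C F h x) \<le> cmod a * pn F"
proof (rule pn_scale_le[OF fam_scale[OF assms] assms norm_ge_zero])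
  show "eventually (\<lambda>h. onorm (\<lambda>x. a *\<^sub>C F h x) \<le> cmod a * onorm (F h)) (at_right 0)"
    using fam_bop_ev[OF assms(1)] by (rule eventually_mono) (intro onorm_scaleC_le bopD1)
qed

lemma pn_sum: assumes "finite A" "\<And>i. i \<in> A \<Longrightarrow> fam (G i)"
  shows "pn (\<lambda>h x. \<Sum>i\<in>A. G i h x) \<le> (\<Sum>i\<in>A. pn (G i))"
proof (rule pn_sum_le[OF assms(1) fam_sum[OF assms(2)] assms(2)])
  have "eventually (\<lambda>h. \<forall>i\<in>A. bop (G i h)) (at_right 0)"
    using assms by (intro eventually_ball_finite) (auto intro: fam_bop_ev)
  then show "eventually (\<lambda>h. onorm (\<lambda>x. \<Sum>i\<in>A. G i h x) \<le> (\<Sum>i\<in>A. onorm (G i h))) (at_right 0)"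
    by (rule eventually_mono) (intro onorm_sum assms(1), auto intro: bopD1)
qed

lemma pn_id: "pn (\<lambda>h x. x) \<le> 1"
  by (rule pn_le[OF fam_id]) (simp add: onorm_id_le)

lemma Cb_fam: assumes "Cb R" shows "fam R"
proof -
  have b: "\<forall>h\<in>{0<..1}. bop (R h)" using assms by (simp add: Cb_def)
  have "bdd_above ((\<lambda>h. onorm (R h)) ` {0<..1})" using assms by (simp add: Cb_def)
  then obtain c where c: "\<forall>h\<in>{0<..1}. onorm (R h) \<le> c"
    unfolding bdd_above_def by auto
  have "eventually (\<lambda>h. bop (R h) \<and> onorm (R h) \<le> c) (at_right 0)"
    using ev01 by (rule eventually_mono) (use b c in blast)
  then show ?thesis by (rule famI')
qed


definition Qs :: "complex \<Rightarrow> ('a::complex_normed_vector \<Rightarrow> 'a) \<Rightarrow> nat \<Rightarrow> 'a \<Rightarrow> 'a" where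
  "Qs z A m x = (\<Sum>s<m. z ^ (m - 1 - s) *\<^sub>C (A ^^ s) x)"

lemma Qs_0[simp]: "Qs z A 0 x = 0" by (simp add: Qs_def)

lemma Qs_Suc: "Qs z A (Suc m) x = z *\<^sub>C Qs z A m x + (A ^^ m) x"
proof -
  have "z *\<^sub>C Qs z A m x = (\<Sum>s<m. z ^ (Suc m - 1 - s) *\<^sub>C (A ^^ s) x)"
    unfolding Qs_def scaleC_sum_right
  proof (rule sum.cong[OF refl])
    fix s assume "s \<in> {..<m}"
    then have "Suc m - 1 - s = Suc (m - 1 - s)" by auto
    then show "z *\<^sub>C z ^ (m - 1 - s) *\<^sub>C (A ^^ s) x = z ^ (Suc m - 1 - s) *\<^sub>C (A ^^ s) x"
      by (simp add: scaleC_scaleC)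
  qed
  then show ?thesis by (simp add: Qs_def scaleC_one)
qed

lemma bop_Qs: "bop A \<Longrightarrow> bop (Qs z A m)"
proof -
  assume A: "bop A"
  have "bop (\<lambda>x. \<Sum>s<m. z ^ (m - 1 - s) *\<^sub>C (A ^^ s) x)"
    by (intro bop_sum bop_scale bop_pow A)
  then show ?thesis by (simp add: Qs_def[abs_def])
qed

lemma Qs_ident: assumes "bop A" shows "z *\<^sub>C Qs z A m x - A (Qs z A m x) = z ^ m *\<^sub>C x - (A ^^ m) x"
proof (induction m)
  case 0 then show ?case by (simp add: bop_zero_ap[OF assms] scaleC_one)
next
  case (Suc m)
  define Q where "Q = Qs z A m x"
  have IH: "z *\<^sub>C Q - A Q = z ^ m *\<^sub>C x - (A ^^ m) x" using Suc by (simp add: Q_def)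
  have "z *\<^sub>C Qs z A (Suc m) x - A (Qs z A (Suc m) x)
      = z *\<^sub>C (z *\<^sub>C Q + (A ^^ m) x) - A (z *\<^sub>C Q + (A ^^ m) x)" by (simp add: Qs_Suc Q_def)
  also have "\<dots> = z *\<^sub>C (z *\<^sub>C Q - A Q) + z *\<^sub>C (A ^^ m) x - A ((A ^^ m) x)"
    by (simp add: scaleC_add_right scaleC_diff_right bop_add_ap[OF assms] bopD2[OF assms] algebra_simps)
  also have "\<dots> = z *\<^sub>C (z ^ m *\<^sub>C x - (A ^^ m) x) + z *\<^sub>C (A ^^ m) x - A ((A ^^ m) x)"
    by (simp add: IH)
  also have "\<dots> = z ^ Suc m *\<^sub>C x - (A ^^ Suc m) x"
    by (simp add: scaleC_diff_right scaleC_scaleC)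
  finally show ?case .
qed

lemma Qs_lin: assumes "bop A" shows "Qs z A m (z *\<^sub>C x - A x) = z *\<^sub>C Qs z A m x - A (Qs z A m x)"
proof -
  have "Qs z A m (z *\<^sub>C x - A x) = (\<Sum>s<m. z *\<^sub>C (z ^ (m - 1 - s) *\<^sub>C (A ^^ s) x) - A (z ^ (m - 1 - s) *\<^sub>C (A ^^ s) x))"
    unfolding Qs_def
  proof (rule sum.cong[OF refl])
    fix s
    have As: "bop (A ^^ s)" by (rule bop_pow[OF assms])
    have "(A ^^ s) (A x) = A ((A ^^ s) x)" by (simp add: funpow_swap1)
    then show "z ^ (m - 1 - s) *\<^sub>C (A ^^ s) (z *\<^sub>C x - A x) =
      z *\<^sub>C (z ^ (m - 1 - s) *\<^sub>C (A ^^ s) x) - A (z ^ (m - 1 - s) *\<^sub>C (A ^^ s) x)"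
      by (simp add: bop_diff_ap[OF As] bopD2[OF As] bopD2[OF assms] scaleC_diff_right scaleC_commute)
  qed
  also have "\<dots> = z *\<^sub>C Qs z A m x - A (Qs z A m x)"
    by (simp add: Qs_def sum_subtractf scaleC_sum_right bop_sum_ap[OF assms])
  finally show ?thesis .
qed

lemma Qs_ident2: assumes "bop A" shows "Qs z A m (z *\<^sub>C x - A x) = z ^ m *\<^sub>C x - (A ^^ m) x"
  using Qs_lin[OF assms] Qs_ident[OF assms] by simp

lemma sum_pairs: fixes n :: nat and f :: "nat \<Rightarrow> 'b::comm_monoid_add"
  shows "(\<Sum>j<2*n. f j) = (\<Sum>k<n. f (2*k) + f (2*k+1))"
  by (induction n) (simp_all add: add.assoc)

lemma cmod_cis_1: "cmod (1 - cis t) \<le> \<bar>t\<bar>"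
proof -
  have "cmod (1 - cis t) = cmod (exp (\<i> * complex_of_real t) - 1)"
    by (simp add: cis_conv_exp norm_minus_commute)
  also have "\<dots> = 2 * \<bar>sin (t / 2)\<bar>" by (rule dist_exp_i_1)
  also have "\<dots> \<le> 2 * \<bar>t / 2\<bar>" using abs_sin_x_le_abs_x[of "t/2"] by simp
  finally show ?thesis by simp
qed

lemma root_sum:
  fixes n s :: nat
  assumes "1 \<le> n" "s < 2 * n"
  shows "(\<Sum>j<2*n. (cis (pi / n) ^ (3 * n - s)) ^ j) = (if s = n then of_nat (2 * n) else 0)"
proof -
  define z where "z = cis (pi / n) ^ (3 * n - s)"
  have zc: "z = cis (real (3 * n - s) * pi / n)" unfolding z_def by (subst Complex.DeMoivre) (simp add: field_simps)
  have "z ^ (2 * n) = cis (real (2 * n) * (real (3 * n - s) * pi / n))"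
    by (simp add: zc Complex.DeMoivre)
  also have "real (2 * n) * (real (3 * n - s) * pi / n) = 2 * pi * real (3 * n - s)"
    using assms by (simp add: field_simps)
  also have "cis (2 * pi * real (3 * n - s)) = 1"
    by (rule cis_multiple_2pi) (simp add: Ints_of_nat)
  finally have zm: "z ^ (2 * n) = 1" .
  show ?thesis
  proof (cases "s = n")
    case True
    then have "3 * n - s = 2 * n" by simp
    then have "z = cis (2 * pi)" using assms by (simp add: zc)
    then have z1: "z = 1" by simp
    have "(\<Sum>j<2*n. (cis (pi / n) ^ (3 * n - s)) ^ j) = (\<Sum>j<2*n. (1::complex))"
      by (simp only: z_def[symmetric] z1 power_one)
    then show ?thesis using True by simp
  next
    case False
    have "z \<noteq> 1"
    proof
      assume "z = 1"
      then have "cos (real (3 * n - s) * pi / n) = 1"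
        using zc by (metis cis.simps(1) one_complex.simps(1))
      then obtain k :: int where k: "real (3 * n - s) * pi / n = real_of_int k * 2 * pi"
        by (auto simp: cos_one_2pi_int)
      then have "real (3 * n - s) * pi = (real_of_int k * 2 * n) * pi" using assms
        by (simp add: divide_eq_eq mult_ac)
      then have "real (3 * n - s) = real_of_int k * 2 * n" by simp
      then have "real_of_int (int (3 * n - s)) = real_of_int (k * 2 * int n)" by simp
      then have k2: "int (3 * n - s) = k * 2 * int n" by (rule of_int_eq_iff[THEN iffD1])
      have "int (3 * n - s) > int n" "int (3 * n - s) \<le> 3 * int n" using assms by auto
      then have l1: "k * (2 * int n) > int n" and l2: "k * (2 * int n) \<le> 3 * int n" using k2 by (simp_all add: mult.assoc)
      have "k > 0"
      proof (rule ccontr)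
        assume "\<not> k > 0"
        then have "k * (2 * int n) \<le> 0" by (intro mult_nonpos_nonneg) auto
        then show False using l1 by linarith
      qed
      moreover have "k < 2"
      proof (rule ccontr)
        assume "\<not> k < 2"
        then have "2 * (2 * int n) \<le> k * (2 * int n)" by (intro mult_right_mono) auto
        then show False using l2 assms by linarith
      qed
      ultimately have "k = 1" by linarith
      then have "3 * n - s = 2 * n" using k2 by simp
      then show False using False assms by simp
    qed
    then show ?thesis using False zm by (simp add: z_def[symmetric] sum_gp_strict)
  qed
qed


lemma res_pt_ident:
  assumes R1: "bop R1" and R2: "bop R2" and A: "bop A"
  shows "R1 x - R2 x - (l' - l) *\<^sub>C R1 (R2 x)
       = (R1 (l *\<^sub>C R2 x - A (R2 x)) - R2 x) - R1 (l' *\<^sub>C R2 x - A (R2 x) - x)"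
  by (simp add: bop_diff_ap[OF R1] bop_add_ap[OF R1] bopD2[OF R1] scaleC_diff_left algebra_simps)

locale resolv =
  fixes U :: "real \<Rightarrow> 'a::complex_normed_vector \<Rightarrow> 'a" and Rs :: "complex \<Rightarrow> real \<Rightarrow> 'a \<Rightarrow> 'a"
  assumes U: "Cb U"
  and RsCb: "\<And>l. l \<noteq> 0 \<Longrightarrow> Cb (Rs l)"
  and Rright: "\<And>l. l \<noteq> 0 \<Longrightarrow> ((\<lambda>h. onorm (\<lambda>x. l *\<^sub>C Rs l h x - U h (Rs l h x) - x)) \<longlongrightarrow> 0) (at_right 0)"
  and Rleft: "\<And>l. l \<noteq> 0 \<Longrightarrow> ((\<lambda>h. onorm (\<lambda>x. Rs l h (l *\<^sub>C x - U h x) - x)) \<longlongrightarrow> 0) (at_right 0)"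
begin

lemma famU: "fam U" by (rule Cb_fam[OF U])
lemma famR: "l \<noteq> 0 \<Longrightarrow> fam (Rs l)" by (rule Cb_fam[OF RsCb])

lemma bopU: "h \<in> {0<..1} \<Longrightarrow> bop (U h)" using U by (simp add: Cb_def)
lemma bopR: "l \<noteq> 0 \<Longrightarrow> h \<in> {0<..1} \<Longrightarrow> bop (Rs l h)" using RsCb by (simp add: Cb_def)

definition E1 where "E1 l = (\<lambda>h x. Rs l h (l *\<^sub>C x - U h x) - x)"
definition E2 where "E2 l = (\<lambda>h x. l *\<^sub>C Rs l h x - U h (Rs l h x) - x)"

lemma famE1: "l \<noteq> 0 \<Longrightarrow> fam (E1 l)"
proof -
  assume l: "l \<noteq> 0"
  have "fam (\<lambda>h x. l *\<^sub>C x - U h x)" by (rule fam_diff[OF fam_scale[OF fam_id] famU])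
  then have "fam (\<lambda>h x. Rs l h (l *\<^sub>C x - U h x))" by (rule fam_comp[OF famR[OF l]])
  then show ?thesis unfolding E1_def by (rule fam_diff[OF _ fam_id])
qed

lemma famE2: "l \<noteq> 0 \<Longrightarrow> fam (E2 l)"
proof -
  assume l: "l \<noteq> 0"
  have "fam (\<lambda>h x. l *\<^sub>C Rs l h x)" by (rule fam_scale[OF famR[OF l]])
  moreover have "fam (\<lambda>h x. U h (Rs l h x))" by (rule fam_comp[OF famU famR[OF l]])
  ultimately have "fam (\<lambda>h x. l *\<^sub>C Rs l h x - U h (Rs l h x))" by (rule fam_diff)
  then show ?thesis unfolding E2_def by (rule fam_diff[OF _ fam_id])
qed

lemma pnE1: assumes "l \<noteq> 0" shows "pn (E1 l) = 0"
  using pn_null[OF famE1[OF assms]] Rleft[OF assms] by (simp add: E1_def)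
lemma pnE2: assumes "l \<noteq> 0" shows "pn (E2 l) = 0"
  using pn_null[OF famE2[OF assms]] Rright[OF assms] by (simp add: E2_def)

lemma K1: assumes "l \<noteq> 0" "l' \<noteq> 0"
  shows "pn (\<lambda>h x. Rs l h x - Rs l' h x - (l' - l) *\<^sub>C Rs l h (Rs l' h x)) = 0"
proof -
  have eq: "eventually (\<lambda>h. (\<lambda>x. Rs l h x - Rs l' h x - (l' - l) *\<^sub>C Rs l h (Rs l' h x))
     = (\<lambda>x. E1 l h (Rs l' h x) - Rs l h (E2 l' h x))) (at_right 0)"
    using ev01 by (rule eventually_mono)
       (simp add: E1_def E2_def res_pt_ident[OF bopR bopR bopU] assms)
  have f1: "fam (\<lambda>h x. E1 l h (Rs l' h x))" by (rule fam_comp[OF famE1 famR]) (use assms in auto)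
  have f2: "fam (\<lambda>h x. Rs l h (E2 l' h x))" by (rule fam_comp[OF famR famE2]) (use assms in auto)
  have "pn (\<lambda>h x. E1 l h (Rs l' h x) - Rs l h (E2 l' h x))
      \<le> pn (\<lambda>h x. E1 l h (Rs l' h x)) + pn (\<lambda>h x. Rs l h (E2 l' h x))"
    by (rule pn_diff[OF f1 f2])
  also have "\<dots> \<le> pn (E1 l) * pn (Rs l') + pn (Rs l) * pn (E2 l')"
    by (intro add_mono pn_comp famE1 famE2 famR assms)
  also have "\<dots> = 0" by (simp add: pnE1 pnE2 assms)
  finally have "pn (\<lambda>h x. E1 l h (Rs l' h x) - Rs l h (E2 l' h x)) \<le> 0" .
  moreover have "0 \<le> pn (\<lambda>h x. E1 l h (Rs l' h x) - Rs l h (E2 l' h x))"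
    by (rule pn_nonneg[OF fam_diff[OF f1 f2]])
  ultimately show ?thesis using pn_cong[OF eq] by simp
qed

lemma famK: assumes "l \<noteq> 0" "l' \<noteq> 0"
  shows "fam (\<lambda>h x. Rs l h x - Rs l' h x - (l' - l) *\<^sub>C Rs l h (Rs l' h x))"
  by (rule fam_diff[OF fam_diff[OF famR famR] fam_scale[OF fam_comp[OF famR famR]]]) (use assms in auto)

lemma K2: assumes "l \<noteq> 0" "l' \<noteq> 0"
  shows "pn (\<lambda>h x. Rs l h x - Rs l' h x) \<le> cmod (l' - l) * pn (Rs l) * pn (Rs l')"
proof -
  have eq: "(\<lambda>h x. Rs l h x - Rs l' h x) = (\<lambda>h x. (Rs l h x - Rs l' h x - (l' - l) *\<^sub>C Rs l h (Rs l' h x))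
       + (l' - l) *\<^sub>C Rs l h (Rs l' h x))" by simp
  have "pn (\<lambda>h x. Rs l h x - Rs l' h x) \<le> pn (\<lambda>h x. Rs l h x - Rs l' h x - (l' - l) *\<^sub>C Rs l h (Rs l' h x))
      + pn (\<lambda>h x. (l' - l) *\<^sub>C Rs l h (Rs l' h x))"
    unfolding eq by (rule pn_add[OF famK[OF assms] fam_scale[OF fam_comp[OF famR famR]]]) (use assms in auto)
  also have "\<dots> \<le> 0 + cmod (l' - l) * (pn (Rs l) * pn (Rs l'))"
  proof (rule add_mono)
    show "pn (\<lambda>h x. Rs l h x - Rs l' h x - (l' - l) *\<^sub>C Rs l h (Rs l' h x)) \<le> 0"
      using K1[OF assms] by simp
    have "pn (\<lambda>h x. (l' - l) *\<^sub>C Rs l h (Rs l' h x)) \<le> cmod (l' - l) * pn (\<lambda>h x. Rs l h (Rs l' h x))"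
      by (rule pn_scale[OF fam_comp[OF famR[OF assms(1)] famR[OF assms(2)]]])
    also have "\<dots> \<le> cmod (l' - l) * (pn (Rs l) * pn (Rs l'))"
      by (rule mult_left_mono[OF pn_comp[OF famR[OF assms(1)] famR[OF assms(2)]] norm_ge_zero])
    finally show "pn (\<lambda>h x. (l' - l) *\<^sub>C Rs l h (Rs l' h x)) \<le> cmod (l' - l) * (pn (Rs l) * pn (Rs l'))" .
  qed
  finally show ?thesis by (simp add: mult.assoc)
qed

lemma K3: assumes "l \<noteq> 0" "l0 \<noteq> 0" "cmod (l - l0) * pn (Rs l0) \<le> 1/2"
  shows "pn (Rs l) \<le> 2 * pn (Rs l0)"
proof -
  have eq: "Rs l = (\<lambda>h x. (Rs l h x - Rs l0 h x - (l0 - l) *\<^sub>C Rs l h (Rs l0 h x))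
       + Rs l0 h x + (l0 - l) *\<^sub>C Rs l h (Rs l0 h x))" by simp
  have f3: "fam (\<lambda>h x. (l0 - l) *\<^sub>C Rs l h (Rs l0 h x))"
    by (rule fam_scale[OF fam_comp[OF famR famR]]) (use assms in auto)
  have "pn (Rs l) \<le> pn (\<lambda>h x. (Rs l h x - Rs l0 h x - (l0 - l) *\<^sub>C Rs l h (Rs l0 h x)) + Rs l0 h x)
      + pn (\<lambda>h x. (l0 - l) *\<^sub>C Rs l h (Rs l0 h x))"
    by (subst eq, rule pn_add[OF fam_add[OF famK famR] f3]) (use assms in auto)
  also have "\<dots> \<le> (0 + pn (Rs l0)) + cmod (l0 - l) * (pn (Rs l) * pn (Rs l0))"
  proof (rule add_mono)
    show "pn (\<lambda>h x. (Rs l h x - Rs l0 h x - (l0 - l) *\<^sub>C Rs l h (Rs l0 h x)) + Rs l0 h x) \<le> 0 + pn (Rs l0)"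
      using pn_add[OF famK famR, of l l0 l0] K1[of l l0] assms by simp
    show "pn (\<lambda>h x. (l0 - l) *\<^sub>C Rs l h (Rs l0 h x)) \<le> cmod (l0 - l) * (pn (Rs l) * pn (Rs l0))"
    proof -
      have "pn (\<lambda>h x. (l0 - l) *\<^sub>C Rs l h (Rs l0 h x)) \<le> cmod (l0 - l) * pn (\<lambda>h x. Rs l h (Rs l0 h x))"
        by (rule pn_scale[OF fam_comp[OF famR[OF assms(1)] famR[OF assms(2)]]])
      also have "\<dots> \<le> cmod (l0 - l) * (pn (Rs l) * pn (Rs l0))"
        by (rule mult_left_mono[OF pn_comp[OF famR[OF assms(1)] famR[OF assms(2)]] norm_ge_zero])
      finally show ?thesis .
    qed
  qed
  also have "\<dots> = pn (Rs l0) + (cmod (l - l0) * pn (Rs l0)) * pn (Rs l)"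
    by (simp add: norm_minus_commute mult_ac)
  also have "\<dots> \<le> pn (Rs l0) + (1/2) * pn (Rs l)"
    using assms(3) pn_nonneg[OF famR[OF assms(1)]] by (intro add_left_mono mult_right_mono) auto
  finally show ?thesis by simp
qed

lemma annulus_bound:
  assumes "0 < \<rho>"
  obtains M where "0 \<le> M" "\<And>l. \<rho> \<le> cmod l \<Longrightarrow> cmod l \<le> \<rho>' \<Longrightarrow> pn (Rs l) \<le> M"
proof -
  define A where "A = cball (0::complex) \<rho>' - ball 0 \<rho>"
  have cA: "compact A" unfolding A_def by (intro compact_diff compact_cball open_ball)
  have A0: "\<And>l. l \<in> A \<Longrightarrow> l \<noteq> 0" using assms by (auto simp: A_def)
  define r where "r = (\<lambda>c. 1 / (2 * (pn (Rs c) + 1)))"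
  have rpos: "0 < r c" if "c \<in> A" for c
  proof -
    have "0 \<le> pn (Rs c)" by (rule pn_nonneg[OF famR[OF A0[OF that]]])
    then show ?thesis unfolding r_def by simp
  qed
  have cover: "A \<subseteq> \<Union> ((\<lambda>c. ball c (r c)) ` A)"
  proof
    fix l assume lA: "l \<in> A"
    have "l \<in> ball l (r l)" using rpos[OF lA] by simp
    then show "l \<in> \<Union> ((\<lambda>c. ball c (r c)) ` A)" using lA by blast
  qed
  obtain C where C: "C \<subseteq> A" "finite C" "A \<subseteq> \<Union> ((\<lambda>c. ball c (r c)) ` C)"
    by (rule compactE_image[OF cA _ cover]) auto
  define M where "M = (\<Sum>c\<in>C. 2 * pn (Rs c))"
  have tnn: "\<And>c. c \<in> C \<Longrightarrow> 0 \<le> 2 * pn (Rs c)" using C(1) pn_nonneg[OF famR[OF A0]] by auto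
  have M0: "0 \<le> M" unfolding M_def by (rule sum_nonneg) (rule tnn)
  have "pn (Rs l) \<le> M" if l1: "\<rho> \<le> cmod l" and l2: "cmod l \<le> \<rho>'" for l
  proof -
    have lA: "l \<in> A" using l1 l2 by (auto simp: A_def)
    then obtain c where c: "c \<in> C" "l \<in> ball c (r c)" using C(3) by blast
    have cA': "c \<in> A" using c(1) C(1) by blast
    have pc: "0 \<le> pn (Rs c)" using pn_nonneg[OF famR[OF A0[OF cA']]] .
    have "cmod (l - c) < r c" using c(2) by (simp add: dist_norm norm_minus_commute)
    then have "cmod (l - c) * pn (Rs c) \<le> r c * pn (Rs c)" using pc by (intro mult_right_mono) auto
    also have "\<dots> \<le> 1/2" using pc by (simp add: r_def field_simps)
    finally have "pn (Rs l) \<le> 2 * pn (Rs c)" by (rule K3[OF A0[OF lA] A0[OF cA']])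
    also have "\<dots> \<le> M" unfolding M_def by (rule member_le_sum[OF c(1)]) (use tnn C(2) in auto)
    finally show ?thesis .
  qed
  with M0 that show ?thesis by blast
qed

end


definition zeta :: "nat \<Rightarrow> complex" where "zeta n = cis (pi / real n)"
definition lam :: "nat \<Rightarrow> real \<Rightarrow> nat \<Rightarrow> complex" where "lam n r j = zeta n ^ j * complex_of_real r"
definition ww :: "nat \<Rightarrow> nat \<Rightarrow> complex" where "ww n j = zeta n ^ (j * (n + 1))"

lemma cmod_zeta[simp]: "cmod (zeta n) = 1" by (simp add: zeta_def norm_cis)
lemma cmod_ww[simp]: "cmod (ww n j) = 1" by (simp add: ww_def norm_power)
lemma cmod_lam: "0 \<le> r \<Longrightarrow> cmod (lam n r j) = r" by (simp add: lam_def norm_mult norm_power)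

lemma zeta_n: "1 \<le> n \<Longrightarrow> zeta n ^ n = -1"
  unfolding zeta_def by (subst Complex.DeMoivre) (simp add: field_simps)

lemma zeta_2n: "1 \<le> n \<Longrightarrow> zeta n ^ (2 * n) = 1"
  using zeta_n[of n] by (simp add: power_mult mult.commute[of 2 n])

lemma ww_odd: "1 \<le> n \<Longrightarrow> ww n (2 * k + 1) = - (ww n (2 * k) * zeta n)"
proof -
  assume n: "1 \<le> n"
  have "ww n (2 * k + 1) = zeta n ^ (2 * k * (n + 1)) * zeta n ^ n * zeta n"
    by (simp add: ww_def algebra_simps power_add)
  then show ?thesis using zeta_n[OF n] by (simp add: ww_def)
qed

lemma lam_odd: "lam n r (2 * k + 1) = zeta n * lam n r (2 * k)"
  by (simp add: lam_def)

lemma cmod_1_zeta: "1 \<le> n \<Longrightarrow> cmod (1 - zeta n) \<le> pi / n"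
  using cmod_cis_1[of "pi / n"] by (simp add: zeta_def)

lemma lam_pow: "1 \<le> n \<Longrightarrow> lam n r j ^ (2 * n) = complex_of_real r ^ (2 * n)"
proof -
  assume n: "1 \<le> n"
  have "lam n r j ^ (2 * n) = (zeta n ^ (2 * n)) ^ j * complex_of_real r ^ (2 * n)"
    by (simp add: lam_def power_mult_distrib flip: power_mult) (simp add: mult.commute)
  then show ?thesis using zeta_2n[OF n] by simp
qed

lemma coef:
  assumes n: "1 \<le> n" and s: "s < 2 * n"
  shows "(\<Sum>j<2*n. ww n j * lam n r j ^ (2 * n - 1 - s))
       = (if s = n then of_nat (2 * n) * complex_of_real r ^ (n - 1) else 0)"
proof -
  have e: "(n + 1) + (2 * n - 1 - s) = 3 * n - s" using n s by auto
  have "(\<Sum>j<2*n. ww n j * lam n r j ^ (2 * n - 1 - s))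
      = (\<Sum>j<2*n. complex_of_real r ^ (2 * n - 1 - s) * (zeta n ^ (3 * n - s)) ^ j)"
  proof (rule sum.cong[OF refl])
    fix j
    define e where "e = 2 * n - 1 - s"
    have "ww n j * lam n r j ^ e = zeta n ^ (j * (n + 1)) * (zeta n ^ j) ^ e * complex_of_real r ^ e"
      by (simp add: ww_def lam_def power_mult_distrib)
    also have "\<dots> = zeta n ^ (j * (n + 1) + j * e) * complex_of_real r ^ e"
      by (simp add: power_add power_mult)
    also have "\<dots> = zeta n ^ (j * ((n + 1) + e)) * complex_of_real r ^ e"
      by (simp only: add_mult_distrib2)
    also have "\<dots> = complex_of_real r ^ e * (zeta n ^ (3 * n - s)) ^ j"
      by (simp only: e_def e) (simp add: power_mult mult.commute[of j])
    finally have "ww n j * lam n r j ^ e = complex_of_real r ^ e * (zeta n ^ (3 * n - s)) ^ j" .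
    then show "ww n j * lam n r j ^ (2 * n - 1 - s) = complex_of_real r ^ (2 * n - 1 - s) * (zeta n ^ (3 * n - s)) ^ j"
      by (simp only: e_def)
  qed
  also have "\<dots> = complex_of_real r ^ (2 * n - 1 - s) * (\<Sum>j<2*n. (zeta n ^ (3 * n - s)) ^ j)"
    by (simp add: sum_distrib_left)
  also have "\<dots> = (if s = n then of_nat (2 * n) * complex_of_real r ^ (n - 1) else 0)"
    using root_sum[OF n s] by (auto simp: zeta_def)
  finally show ?thesis .
qed

lemma Q_sum:
  assumes n: "1 \<le> n"
  shows "(\<Sum>j<2*n. ww n j *\<^sub>C Qs (lam n r j) A (2 * n) x)
       = (of_nat (2 * n) * complex_of_real r ^ (n - 1)) *\<^sub>C (A ^^ n) x"
proof -
  have "(\<Sum>j<2*n. ww n j *\<^sub>C Qs (lam n r j) A (2 * n) x)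
      = (\<Sum>j<2*n. \<Sum>s<2*n. (ww n j * lam n r j ^ (2 * n - 1 - s)) *\<^sub>C (A ^^ s) x)"
    by (simp add: Qs_def scaleC_sum_right scaleC_scaleC)
  also have "\<dots> = (\<Sum>s<2*n. \<Sum>j<2*n. (ww n j * lam n r j ^ (2 * n - 1 - s)) *\<^sub>C (A ^^ s) x)"
    by (rule sum.swap)
  also have "\<dots> = (\<Sum>s<2*n. (if s = n then of_nat (2 * n) * complex_of_real r ^ (n - 1) else 0) *\<^sub>C (A ^^ s) x)"
  proof (rule sum.cong[OF refl])
    fix s assume "s \<in> {..<2*n}"
    then have s: "s < 2 * n" by simp
    show "(\<Sum>j<2*n. (ww n j * lam n r j ^ (2 * n - 1 - s)) *\<^sub>C (A ^^ s) x) =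
      (if s = n then of_nat (2 * n) * complex_of_real r ^ (n - 1) else 0) *\<^sub>C (A ^^ s) x"
      by (simp only: scaleC_sum_left[symmetric] coef[OF n s])
  qed
  also have "\<dots> = (\<Sum>s<2*n. if s = n then (of_nat (2 * n) * complex_of_real r ^ (n - 1)) *\<^sub>C (A ^^ s) x else 0)"
    by (rule sum.cong[OF refl]) simp
  also have "\<dots> = (of_nat (2 * n) * complex_of_real r ^ (n - 1)) *\<^sub>C (A ^^ n) x"
    using n by (subst sum.delta) auto
  finally show ?thesis .
qed


context resolv begin

definition SS where "SS n r = (\<lambda>h x. \<Sum>j<2*n. ww n j *\<^sub>C Rs (lam n r j) h x)"

lemma lam_nz: "0 < r \<Longrightarrow> lam n r j \<noteq> 0"
  using cmod_lam[of r n j] by auto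

lemma famSS: "0 < r \<Longrightarrow> fam (SS n r)"
  unfolding SS_def by (rule fam_sum, rule fam_scale, rule famR, rule lam_nz)

lemma SS_bound:
  assumes n: "1 \<le> n" and r: "0 < \<rho>" "\<rho> \<le> r" "r \<le> \<rho>'"
    and M: "0 \<le> M" "\<And>l. \<rho> \<le> cmod l \<Longrightarrow> cmod l \<le> \<rho>' \<Longrightarrow> pn (Rs l) \<le> M"
  shows "pn (SS n r) \<le> pi * (\<rho>' * M\<^sup>2 + M)"
proof -
  have r0: "0 < r" using r by simp
  define z where "z = zeta n"
  define mu where "mu = (\<lambda>k. lam n r (2 * k))"
  have mu_nz: "mu k \<noteq> 0" for k unfolding mu_def by (rule lam_nz[OF r0])
  have z_nz: "z \<noteq> 0" using cmod_zeta[of n] unfolding z_def by (metis norm_zero zero_neq_one)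
  have zmu_nz: "z * mu k \<noteq> 0" for k using mu_nz[of k] z_nz by simp
  have cmu: "cmod (mu k) = r" for k unfolding mu_def using r0 by (simp add: cmod_lam)
  have czmu: "cmod (z * mu k) = r" for k using cmu[of k] by (simp add: z_def norm_mult)
  have Mb: "pn (Rs l) \<le> M" if "cmod l = r" for l using M(2) that r by auto
  define T where "T = (\<lambda>k h x. ww n (2 * k) *\<^sub>C (Rs (mu k) h x - z *\<^sub>C Rs (z * mu k) h x))"
  define D where "D = (\<lambda>k h x. Rs (mu k) h x - z *\<^sub>C Rs (z * mu k) h x)"
  have famD: "fam (D k)" for k
    unfolding D_def by (rule fam_diff[OF famR fam_scale[OF famR]]) (simp_all add: mu_nz zmu_nz z_nz)
  have famT: "fam (T k)" for k
    unfolding T_def using fam_scale[OF famD[of k], of "ww n (2 * k)"] by (simp add: D_def)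
  have SS_eq: "SS n r = (\<lambda>h x. \<Sum>k<n. T k h x)"
  proof (intro ext)
    fix h x
    have "SS n r h x = (\<Sum>k<n. ww n (2 * k) *\<^sub>C Rs (lam n r (2 * k)) h x
        + ww n (2 * k + 1) *\<^sub>C Rs (lam n r (2 * k + 1)) h x)"
      unfolding SS_def by (rule sum_pairs)
    also have "\<dots> = (\<Sum>k<n. T k h x)"
    proof (rule sum.cong[OF refl])
      fix k
      show "ww n (2 * k) *\<^sub>C Rs (lam n r (2 * k)) h x + ww n (2 * k + 1) *\<^sub>C Rs (lam n r (2 * k + 1)) h x = T k h x"
        unfolding T_def mu_def z_def ww_odd[OF n] lam_odd
        by (simp add: scaleC_diff_right scaleC_scaleC scaleC_minus_left)
    qed
    finally show "SS n r h x = (\<Sum>k<n. T k h x)" .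
  qed
  have Tb: "pn (T k) \<le> pi / n * (\<rho>' * M\<^sup>2 + M)" for k
  proof -
    have pR1: "0 \<le> pn (Rs (mu k))" "pn (Rs (mu k)) \<le> M" using pn_nonneg[OF famR[OF mu_nz]] Mb[OF cmu] by auto
    have pR2: "0 \<le> pn (Rs (z * mu k))" "pn (Rs (z * mu k)) \<le> M" using pn_nonneg[OF famR[OF zmu_nz]] Mb[OF czmu] by auto
    have c1: "cmod (1 - z) \<le> pi / n" unfolding z_def by (rule cmod_1_zeta[OF n])
    have "pn (T k) \<le> cmod (ww n (2 * k)) * pn (D k)"
      unfolding T_def using pn_scale[OF famD[of k], of "ww n (2 * k)"] by (simp add: D_def)
    also have "\<dots> = pn (D k)" by simp
    also have "D k = (\<lambda>h x. (Rs (mu k) h x - Rs (z * mu k) h x) + (1 - z) *\<^sub>C Rs (z * mu k) h x)"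
      unfolding D_def by (simp add: scaleC_diff_left scaleC_one)
    also have "pn \<dots> \<le> pn (\<lambda>h x. Rs (mu k) h x - Rs (z * mu k) h x) + pn (\<lambda>h x. (1 - z) *\<^sub>C Rs (z * mu k) h x)"
      by (rule pn_add[OF fam_diff[OF famR famR] fam_scale[OF famR]]) (simp_all add: mu_nz zmu_nz z_nz)
    also have "\<dots> \<le> cmod (z * mu k - mu k) * pn (Rs (mu k)) * pn (Rs (z * mu k)) + cmod (1 - z) * pn (Rs (z * mu k))"
      by (rule add_mono[OF K2[OF mu_nz zmu_nz] pn_scale[OF famR[OF zmu_nz]]])
    also have "cmod (z * mu k - mu k) = cmod (1 - z) * r"
    proof -
      have "z * mu k - mu k = - ((1 - z) * mu k)" by (simp add: algebra_simps)
      then have "cmod (z * mu k - mu k) = cmod (1 - z) * cmod (mu k)" by (simp only: norm_minus_cancel norm_mult)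
      then show ?thesis using cmu[of k] by simp
    qed
    also have "cmod (1 - z) * r * pn (Rs (mu k)) * pn (Rs (z * mu k)) + cmod (1 - z) * pn (Rs (z * mu k))
        \<le> cmod (1 - z) * r * M * M + cmod (1 - z) * M"
      using pR1 pR2 r0 by (intro add_mono mult_mono mult_left_mono) auto
    also have "\<dots> = cmod (1 - z) * (r * M\<^sup>2 + M)" by (simp add: power2_eq_square algebra_simps)
    also have "\<dots> \<le> pi / n * (\<rho>' * M\<^sup>2 + M)"
      using c1 r M(1) by (intro mult_mono add_mono mult_right_mono) auto
    finally show ?thesis .
  qed
  have "pn (SS n r) \<le> (\<Sum>k<n. pn (T k))"
    unfolding SS_eq by (rule pn_sum) (auto intro: famT)
  also have "\<dots> \<le> (\<Sum>k<n. pi / n * (\<rho>' * M\<^sup>2 + M))" by (rule sum_mono) (rule Tb)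
  also have "\<dots> = pi * (\<rho>' * M\<^sup>2 + M)" using n by simp
  finally show ?thesis .
qed

lemma SS_pt:
  assumes n: "1 \<le> n" and r0: "0 < r" and h: "h \<in> {0<..1}"
  shows "SS n r h (complex_of_real r ^ (2 * n) *\<^sub>C x - (U h ^^ (2 * n)) x)
    = (of_nat (2 * n) * complex_of_real r ^ (n - 1)) *\<^sub>C (U h ^^ n) x
      + (\<Sum>j<2*n. ww n j *\<^sub>C E1 (lam n r j) h (Qs (lam n r j) (U h) (2 * n) x))"
proof -
  have each: "Rs (lam n r j) h (complex_of_real r ^ (2 * n) *\<^sub>C x - (U h ^^ (2 * n)) x)
     = E1 (lam n r j) h (Qs (lam n r j) (U h) (2 * n) x) + Qs (lam n r j) (U h) (2 * n) x" for j
  proof -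
    have "complex_of_real r ^ (2 * n) *\<^sub>C x - (U h ^^ (2 * n)) x
        = lam n r j *\<^sub>C Qs (lam n r j) (U h) (2 * n) x - U h (Qs (lam n r j) (U h) (2 * n) x)"
      using Qs_ident[OF bopU[OF h], of "lam n r j" "2 * n" x] lam_pow[OF n, of r j] by simp
    then show ?thesis by (simp add: E1_def)
  qed
  have "SS n r h (complex_of_real r ^ (2 * n) *\<^sub>C x - (U h ^^ (2 * n)) x)
      = (\<Sum>j<2*n. ww n j *\<^sub>C E1 (lam n r j) h (Qs (lam n r j) (U h) (2 * n) x))
        + (\<Sum>j<2*n. ww n j *\<^sub>C Qs (lam n r j) (U h) (2 * n) x)"
    by (simp add: SS_def each scaleC_add_right sum.distrib)
  also have "(\<Sum>j<2*n. ww n j *\<^sub>C Qs (lam n r j) (U h) (2 * n) x)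
      = (of_nat (2 * n) * complex_of_real r ^ (n - 1)) *\<^sub>C (U h ^^ n) x"
    by (rule Q_sum[OF n])
  finally show ?thesis by (simp add: add.commute)
qed

lemma pow_comp: "(U h ^^ (2 * n)) = (\<lambda>x. (U h ^^ n) ((U h ^^ n) x))"
  by (simp add: mult_2 funpow_add o_def)

lemma pnU_pow2: "pn (\<lambda>h. U h ^^ (2 * n)) \<le> (pn (\<lambda>h. U h ^^ n))\<^sup>2"
proof -
  have "pn (\<lambda>h. U h ^^ (2 * n)) = pn (\<lambda>h x. (U h ^^ n) ((U h ^^ n) x))"
    by (simp only: pow_comp)
  also have "\<dots> \<le> pn (\<lambda>h. U h ^^ n) * pn (\<lambda>h. U h ^^ n)"
    using pn_comp[OF fam_pow[OF famU] fam_pow[OF famU], of n n] by simp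
  finally show ?thesis by (simp add: power2_eq_square)
qed

lemma pnU_pow: "pn (\<lambda>h. U h ^^ n) \<le> pn U ^ n"
proof (induction n)
  case 0
  have "pn (\<lambda>h. U h ^^ 0) = pn (\<lambda>h (x::'a). x)" by (simp add: id_def)
  then show ?case using pn_id by simp
next
  case (Suc n)
  have "pn (\<lambda>h. U h ^^ Suc n) = pn (\<lambda>h x. U h ((U h ^^ n) x))" by (simp add: o_def)
  also have "\<dots> \<le> pn U * pn (\<lambda>h. U h ^^ n)"
    using pn_comp[OF famU fam_pow[OF famU], of n] by simp
  also have "\<dots> \<le> pn U * pn U ^ n"
    by (rule mult_left_mono[OF Suc.IH pn_nonneg[OF famU]])
  finally show ?case by (simp only: power_Suc)
qed

lemma claimB:
  assumes n: "1 \<le> n" and r0: "0 < r"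
  shows "(2 * real n * r ^ (n - 1)) * pn (\<lambda>h. U h ^^ n)
       \<le> pn (SS n r) * (r ^ (2 * n) + (pn (\<lambda>h. U h ^^ n))\<^sup>2)"
proof -
  define c where "c = of_nat (2 * n) * complex_of_real r ^ (n - 1)"
  have cc: "cmod c = 2 * real n * r ^ (n - 1)" using r0 by (simp add: c_def norm_mult norm_power)
  have c0: "c \<noteq> 0" using n r0 by (simp add: c_def)
  define Qf where "Qf = (\<lambda>j h x. Qs (lam n r j) (U h) (2 * n) x)"
  have famQ: "fam (Qf j)" for j
    unfolding Qf_def Qs_def by (rule fam_sum, rule fam_scale, rule fam_pow[OF famU])
  define V where "V = (\<lambda>j h x. ww n j *\<^sub>C E1 (lam n r j) h (Qf j h x))"
  have famEQ: "fam (\<lambda>h x. E1 (lam n r j) h (Qf j h x))" for j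
    by (rule fam_comp[OF famE1[OF lam_nz[OF r0]] famQ])
  have famV: "fam (V j)" for j unfolding V_def by (rule fam_scale[OF famEQ])
  have pV: "pn (V j) \<le> 0" for j
  proof -
    have "pn (V j) \<le> cmod (ww n j) * pn (\<lambda>h x. E1 (lam n r j) h (Qf j h x))"
      unfolding V_def by (rule pn_scale[OF famEQ])
    also have "\<dots> \<le> 1 * (pn (E1 (lam n r j)) * pn (Qf j))"
      using pn_comp[OF famE1[OF lam_nz[OF r0]] famQ] by simp
    also have "\<dots> = 0" using pnE1[OF lam_nz[OF r0]] by simp
    finally show ?thesis .
  qed
  define G where "G = (\<lambda>h x. complex_of_real r ^ (2 * n) *\<^sub>C x - (U h ^^ (2 * n)) x)"
  have famG: "fam G" unfolding G_def by (rule fam_diff[OF fam_scale[OF fam_id] fam_pow[OF famU]])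
  have pG: "pn G \<le> r ^ (2 * n) + (pn (\<lambda>h. U h ^^ n))\<^sup>2"
  proof -
    have "pn G \<le> pn (\<lambda>h (x::'a). complex_of_real r ^ (2 * n) *\<^sub>C x) + pn (\<lambda>h. U h ^^ (2 * n))"
      unfolding G_def by (rule pn_diff[OF fam_scale[OF fam_id] fam_pow[OF famU]])
    also have "pn (\<lambda>h (x::'a). complex_of_real r ^ (2 * n) *\<^sub>C x) \<le> cmod (complex_of_real r ^ (2 * n)) * pn (\<lambda>h (x::'a). x)"
      by (rule pn_scale[OF fam_id])
    also have "\<dots> \<le> r ^ (2 * n) * 1"
    proof -
      have p1: "pn (\<lambda>h (x::'a). x) \<le> 1" by (rule pn_id)
      have "cmod (complex_of_real r ^ (2 * n)) = r ^ (2 * n)" using r0 by (simp add: norm_power)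
      then show ?thesis using p1 r0 by (simp add: mult_left_mono)
    qed
    finally show ?thesis using pnU_pow2[of n] by simp
  qed
  have famSG: "fam (\<lambda>h x. SS n r h (G h x))" by (rule fam_comp[OF famSS[OF r0] famG])
  have famSV: "fam (\<lambda>h x. \<Sum>j<2*n. V j h x)" by (rule fam_sum[OF famV])
  have eq: "eventually (\<lambda>h. (\<lambda>x. c *\<^sub>C (U h ^^ n) x) = (\<lambda>x. SS n r h (G h x) - (\<Sum>j<2*n. V j h x))) (at_right 0)"
    using ev01 by (rule eventually_mono) (simp add: SS_pt[OF n r0] G_def V_def Qf_def c_def)
  have "pn (\<lambda>h x. c *\<^sub>C (U h ^^ n) x) = pn (\<lambda>h x. SS n r h (G h x) - (\<Sum>j<2*n. V j h x))"
    by (rule pn_cong[OF eq])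
  also have "\<dots> \<le> pn (\<lambda>h x. SS n r h (G h x)) + pn (\<lambda>h x. \<Sum>j<2*n. V j h x)"
    by (rule pn_diff[OF famSG famSV])
  also have "\<dots> \<le> pn (SS n r) * pn G + (\<Sum>j<2*n. pn (V j))"
    by (rule add_mono[OF pn_comp[OF famSS[OF r0] famG] pn_sum[OF _ famV]]) simp
  also have "\<dots> \<le> pn (SS n r) * (r ^ (2 * n) + (pn (\<lambda>h. U h ^^ n))\<^sup>2) + 0"
    using pV pG pn_nonneg[OF famSS[OF r0]]
    by (intro add_mono mult_left_mono sum_nonpos) auto
  finally have up: "pn (\<lambda>h x. c *\<^sub>C (U h ^^ n) x) \<le> pn (SS n r) * (r ^ (2 * n) + (pn (\<lambda>h. U h ^^ n))\<^sup>2)"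
    by simp
  have famcU: "fam (\<lambda>h x. c *\<^sub>C (U h ^^ n) x)" by (rule fam_scale[OF fam_pow[OF famU]])
  have "pn (\<lambda>h. U h ^^ n) = pn (\<lambda>h x. inverse c *\<^sub>C (c *\<^sub>C (U h ^^ n) x))"
    using c0 by (simp add: scaleC_scaleC scaleC_one)
  also have "\<dots> \<le> cmod (inverse c) * pn (\<lambda>h x. c *\<^sub>C (U h ^^ n) x)"
    by (rule pn_scale[OF famcU])
  finally have "cmod c * pn (\<lambda>h. U h ^^ n) \<le> cmod c * (cmod (inverse c) * pn (\<lambda>h x. c *\<^sub>C (U h ^^ n) x))"
    by (rule mult_left_mono) simp
  also have "\<dots> = pn (\<lambda>h x. c *\<^sub>C (U h ^^ n) x)" using c0 by (simp add: norm_inverse)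
  finally show ?thesis using up cc by simp
qed

end


context resolv begin

lemma quasinil: "asymp_quasinilpotent U"
proof -
  have eqf: "(\<lambda>n. root n (real_of_ereal (Limsup (at_right 0) (\<lambda>h. ereal (onorm (U h ^^ n))))))
      = (\<lambda>n. root n (pn (\<lambda>h. U h ^^ n)))" by (simp add: pn_def)
  have "(\<lambda>n. root n (pn (\<lambda>h. U h ^^ n))) \<longlonglongrightarrow> 0"
  proof (rule order_tendstoI)
    fix a :: real assume a: "a < 0"
    have "a < root n (pn (\<lambda>h. U h ^^ n))" for n
    proof -
      have "0 \<le> root n (pn (\<lambda>h. U h ^^ n))"
        by (rule real_root_ge_zero[OF pn_nonneg[OF fam_pow[OF famU]]])
      then show ?thesis using a by linarith
    qed
    then show "eventually (\<lambda>n. a < root n (pn (\<lambda>h. U h ^^ n))) sequentially"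
      by (intro always_eventually allI)
  next
    fix \<rho> :: real assume \<rho>: "0 < \<rho>"
    define \<rho>' where "\<rho>' = pn U + \<rho> + 1"
    have pU0: "0 \<le> pn U" by (rule pn_nonneg[OF famU])
    obtain M where M: "0 \<le> M" "\<And>l. \<rho> \<le> cmod l \<Longrightarrow> cmod l \<le> \<rho>' \<Longrightarrow> pn (Rs l) \<le> M"
      using annulus_bound[where \<rho>'=\<rho>', OF \<rho>] by blast
    define K where "K = pi * (\<rho>' * M\<^sup>2 + M)"
    have K0: "0 \<le> K" using M(1) pU0 \<rho> by (simp add: K_def \<rho>'_def)
    have "eventually (\<lambda>n. nat \<lceil>K * \<rho>'\<rceil> + 1 \<le> n) sequentially" by (rule eventually_ge_at_top)
    then show "eventually (\<lambda>n. root n (pn (\<lambda>h. U h ^^ n)) < \<rho>) sequentially"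
    proof (rule eventually_mono)
      fix n assume nge: "nat \<lceil>K * \<rho>'\<rceil> + 1 \<le> n"
      have n1: "1 \<le> n" using nge by simp
      have "K * \<rho>' \<le> real (nat \<lceil>K * \<rho>'\<rceil>)" by (rule real_nat_ceiling_ge)
      also have "\<dots> + 1 \<le> real n" using nge by linarith
      finally have nK: "K * \<rho>' < real n" by simp
      define p where "p = pn (\<lambda>h. U h ^^ n)"
      define t where "t = root n p"
      have p0: "0 \<le> p" unfolding p_def by (rule pn_nonneg[OF fam_pow[OF famU]])
      have t0: "0 \<le> t" unfolding t_def by (rule real_root_ge_zero[OF p0])
      have tp: "t ^ n = p" unfolding t_def using n1 p0 by (simp add: real_root_pow_pos2)
      have tlt: "t < \<rho>'"
      proof (rule ccontr)
        assume "\<not> t < \<rho>'"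
        then have "\<rho>' \<le> t" by simp
        then have "\<rho>' ^ n \<le> t ^ n" using \<rho> pU0 by (intro power_mono) (auto simp: \<rho>'_def)
        moreover have "pn U ^ n < \<rho>' ^ n" using n1 pU0 by (intro power_strict_mono) (use \<rho> in \<open>auto simp: \<rho>'_def\<close>)
        moreover have "p \<le> pn U ^ n" unfolding p_def by (rule pnU_pow)
        ultimately show False using tp by linarith
      qed
      show "root n (pn (\<lambda>h. U h ^^ n)) < \<rho>"
      proof (rule ccontr)
        assume "\<not> root n (pn (\<lambda>h. U h ^^ n)) < \<rho>"
        then have tr: "\<rho> \<le> t" by (simp add: t_def p_def)
        have tpos: "0 < t" using \<rho> tr by simp
        have B: "(2 * real n * t ^ (n - 1)) * p \<le> pn (SS n t) * (t ^ (2 * n) + p\<^sup>2)"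
          unfolding p_def by (rule claimB[OF n1 tpos])
        have SB: "pn (SS n t) \<le> K"
          unfolding K_def by (rule SS_bound[OF n1 \<rho> tr less_imp_le[OF tlt] M])
        define q where "q = t ^ (2 * n - 1)"
        have q0: "0 < q" using tpos by (simp add: q_def)
        have "n - 1 + n = 2 * n - 1" using n1 by simp
        then have e1: "t ^ (n - 1) * p = q" unfolding tp[symmetric] q_def
          by (metis power_add)
        have e2: "t ^ (2 * n) = t * q" using n1 unfolding q_def
          by (simp add: power_Suc[symmetric])
        have e3: "p\<^sup>2 = t ^ (2 * n)" unfolding tp[symmetric] by (simp add: power_mult[symmetric] mult.commute)
        have "2 * real n * q = (2 * real n * t ^ (n - 1)) * p" using e1 by (simp add: mult.assoc)
        also have "\<dots> \<le> pn (SS n t) * (t ^ (2 * n) + p\<^sup>2)" by (rule B)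
        also have "t ^ (2 * n) + p\<^sup>2 = 2 * t * q" using e2 e3 by simp
        finally have "2 * real n * q \<le> pn (SS n t) * (2 * t * q)" .
        also have "\<dots> \<le> K * (2 * t * q)" using SB tpos q0 by (intro mult_right_mono) auto
        finally have "2 * real n * q \<le> (2 * K * t) * q" by (simp add: mult_ac)
        then have "real n \<le> K * t" using q0 by simp
        also have "\<dots> \<le> K * \<rho>'" using K0 tlt by (intro mult_left_mono) auto
        finally show False using nK by simp
      qed
    qed
  qed
  then show ?thesis unfolding asymp_quasinilpotent_def eqf .
qed

end


lemma pn_pow_Limsup: "asymp_quasinilpotent U \<longleftrightarrow> (\<lambda>n. root n (pn (\<lambda>h. U h ^^ n))) \<longlonglongrightarrow> 0"
  by (simp add: asymp_quasinilpotent_def pn_def)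

lemma forward_zero:
  fixes U :: "real \<Rightarrow> 'a::complex_normed_vector \<Rightarrow> 'a"
  and x0 :: 'a
  assumes U: "Cb U" and x0: "x0 \<noteq> 0" and qn: "asymp_quasinilpotent U"
  shows "0 \<notin> asymp_resolvent_set U"
proof
  assume "0 \<in> asymp_resolvent_set U"
  then obtain R where R: "Cb R" and lim: "((\<lambda>h. onorm (\<lambda>x. R h (0 *\<^sub>C x - U h x) - x)) \<longlongrightarrow> 0) (at_right 0)"
    unfolding asymp_resolvent_set_def by blast
  obtain M0 where M00: "0 \<le> M0" and M0: "eventually (\<lambda>h. bop (R h) \<and> onorm (R h) \<le> M0) (at_right 0)"
    by (rule famE[OF Cb_fam[OF R]])
  define M where "M = M0 + 1"
  have M: "0 < M" "M0 \<le> M" using M00 by (auto simp: M_def)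
  have ev: "eventually (\<lambda>h. onorm (\<lambda>x. R h (0 *\<^sub>C x - U h x) - x) < 1/2) (at_right 0)"
    using order_tendstoD(2)[OF lim, of "1/2"] by simp
  have key: "eventually (\<lambda>h. \<forall>k. (1 / (2 * M)) ^ k \<le> onorm (U h ^^ k)) (at_right 0)"
    using ev M0 ev01
  proof eventually_elim
    case (elim h)
    have bU: "bop (U h)" using elim(3) U by (simp add: Cb_def)
    have bR: "bop (R h)" using elim(2) by simp
    define E where "E = (\<lambda>x. R h (0 *\<^sub>C x - U h x) - x)"
    have bE: "bounded_linear E" unfolding E_def
      by (rule bopD1[OF bop_diff[OF bop_comp[OF bR bop_diff[OF bop_scale[OF bop_id] bU]] bop_id]])
    have step: "norm y \<le> 2 * M * norm (U h y)" for y
    proof -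
      have "y = R h (- U h y) - E y" by (simp add: E_def)
      then have "norm y = norm (R h (- U h y) - E y)" by simp
      also have "\<dots> \<le> norm (R h (- U h y)) + norm (E y)" by (rule norm_triangle_ineq4)
      also have "\<dots> \<le> onorm (R h) * norm (U h y) + onorm E * norm y"
        using onorm_pt[OF bR, of "- U h y"] onorm[OF bE, of y] by simp
      also have "\<dots> \<le> M0 * norm (U h y) + 1/2 * norm y"
        using elim(1,2) by (intro add_mono mult_right_mono) (auto simp: E_def)
      finally have "norm y \<le> 2 * M0 * norm (U h y)" by simp
      also have "\<dots> \<le> 2 * M * norm (U h y)" using M by (intro mult_right_mono) auto
      finally show ?thesis .
    qed
    have pw: "norm y \<le> (2 * M) ^ k * norm ((U h ^^ k) y)" for k y
    proof (induction k arbitrary: y)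
      case 0 then show ?case by simp
    next
      case (Suc k)
      have "norm y \<le> 2 * M * norm (U h y)" by (rule step)
      also have "\<dots> \<le> 2 * M * ((2 * M) ^ k * norm ((U h ^^ k) (U h y)))"
        using Suc.IH[of "U h y"] M by (intro mult_left_mono) auto
      also have "(U h ^^ k) (U h y) = (U h ^^ Suc k) y" by (simp add: funpow_swap1)
      finally show ?case by (simp add: mult_ac)
    qed
    show ?case
    proof
      fix k
      have "norm x0 \<le> (2 * M) ^ k * norm ((U h ^^ k) x0)" by (rule pw)
      also have "\<dots> \<le> (2 * M) ^ k * (onorm (U h ^^ k) * norm x0)"
        using onorm_pt[OF bop_pow[OF bU], of k x0] M by (intro mult_left_mono) auto
      finally have "1 \<le> (2 * M) ^ k * onorm (U h ^^ k)" using x0 by (simp add: mult.assoc)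
      then show "(1 / (2 * M)) ^ k \<le> onorm (U h ^^ k)" using M
        by (simp add: power_divide field_simps)
    qed
  qed
  have lb: "(1 / (2 * M)) ^ k \<le> pn (\<lambda>h. U h ^^ k)" for k
    by (rule pn_ge[OF fam_pow[OF Cb_fam[OF U]]]) (rule eventually_mono[OF key], simp)
  have "eventually (\<lambda>k. root k (pn (\<lambda>h. U h ^^ k)) < 1 / (2 * M)) sequentially"
    using qn M unfolding pn_pow_Limsup by (intro order_tendstoD(2)) auto
  then obtain k0 where k0: "\<And>k. k \<ge> k0 \<Longrightarrow> root k (pn (\<lambda>h. U h ^^ k)) < 1 / (2 * M)"
    by (auto simp: eventually_sequentially)
  define k where "k = Suc k0"
  have rk: "root k (pn (\<lambda>h. U h ^^ k)) < 1 / (2 * M)" by (rule k0) (simp add: k_def)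
  have p0: "0 \<le> pn (\<lambda>h. U h ^^ k)" by (rule pn_nonneg[OF fam_pow[OF Cb_fam[OF U]]])
  have k1: "0 < k" by (simp add: k_def)
  have "pn (\<lambda>h. U h ^^ k) = root k (pn (\<lambda>h. U h ^^ k)) ^ k"
    using p0 k1 by (simp add: real_root_pow_pos2)
  also have "\<dots> < (1 / (2 * M)) ^ k"
    using rk p0 k1 by (intro power_strict_mono) (auto simp: real_root_ge_zero)
  finally show False using lb[of k] by simp
qed


lemma block_sum:
  fixes f g :: "nat \<Rightarrow> real"
  assumes fg: "\<And>i u. u < N \<Longrightarrow> f (i * N + u) \<le> (1/2) ^ i * g u" and g0: "\<And>u. 0 \<le> g u"
  shows "(\<Sum>s<q*N. f s) \<le> 2 * (\<Sum>u<N. g u)"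
proof -
  have "(\<Sum>s<q*N. f s) = (\<Sum>i<q. sum f {i*N..<i*N+N})" by (rule sum.nat_group[symmetric])
  also have "\<dots> = (\<Sum>i<q. \<Sum>u<N. f (i*N + u))"
  proof (rule sum.cong[OF refl])
    fix i
    have "sum f {i*N..<i*N+N} = sum f {0 + i*N..<N + i*N}" by (simp add: add.commute)
    also have "\<dots> = (\<Sum>u = 0..<N. f (u + i*N))" by (rule sum.shift_bounds_nat_ivl)
    finally show "sum f {i*N..<i*N+N} = (\<Sum>u<N. f (i*N + u))" by (simp add: atLeast0LessThan add.commute)
  qed
  also have "\<dots> \<le> (\<Sum>i<q. (1/2) ^ i * (\<Sum>u<N. g u))"
    unfolding sum_distrib_left by (intro sum_mono fg) auto
  also have "\<dots> = (\<Sum>i<q. (1/2::real) ^ i) * (\<Sum>u<N. g u)" by (simp add: sum_distrib_right)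
  also have "\<dots> \<le> 2 * (\<Sum>u<N. g u)"
  proof (rule mult_right_mono)
    have "(\<Sum>i<q. (1/2::real) ^ i) = (1 - (1/2) ^ q) / (1 - 1/2)" by (simp add: sum_gp_strict)
    also have "\<dots> \<le> 2" by simp
    finally show "(\<Sum>i<q. (1/2::real) ^ i) \<le> 2" .
    show "0 \<le> (\<Sum>u<N. g u)" by (rule sum_nonneg) (rule g0)
  qed
  finally show ?thesis .
qed

lemma tendsto_by_bound:
  assumes "eventually (\<lambda>h. 0 \<le> F h \<and> F h \<le> h) (at_right (0::real))"
  shows "(F \<longlongrightarrow> 0) (at_right (0::real))"
proof (rule tendsto_sandwich[where f="\<lambda>h. 0" and h="\<lambda>h. h"])
  show "eventually (\<lambda>h. 0 \<le> F h) (at_right 0)" using assms by (rule eventually_mono) simp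
  show "eventually (\<lambda>h. F h \<le> h) (at_right 0)" using assms by (rule eventually_mono) simp
  show "((\<lambda>h. 0) \<longlongrightarrow> (0::real)) (at_right 0)" by simp
  show "((\<lambda>h. h) \<longlongrightarrow> (0::real)) (at_right 0)" by (rule tendsto_ident_at)
qed

lemma err_right:
  assumes A: "bop A" and l: "l \<noteq> 0"
  shows "(\<lambda>x. l *\<^sub>C (inverse l ^ K *\<^sub>C Qs l A K x) - A (inverse l ^ K *\<^sub>C Qs l A K x) - x)
       = (\<lambda>x. - (inverse l ^ K *\<^sub>C (A ^^ K) x))"
proof
  fix x
  have il: "inverse l ^ K * l ^ K = 1" using l by (simp add: power_mult_distrib[symmetric])
  have "l *\<^sub>C (inverse l ^ K *\<^sub>C Qs l A K x) - A (inverse l ^ K *\<^sub>C Qs l A K x)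
      = inverse l ^ K *\<^sub>C (l *\<^sub>C Qs l A K x - A (Qs l A K x))"
    by (simp add: bopD2[OF A] scaleC_commute scaleC_diff_right)
  also have "\<dots> = inverse l ^ K *\<^sub>C (l ^ K *\<^sub>C x - (A ^^ K) x)" by (simp add: Qs_ident[OF A])
  also have "\<dots> = x - inverse l ^ K *\<^sub>C (A ^^ K) x" by (simp add: scaleC_diff_right scaleC_scaleC il scaleC_one)
  finally show "l *\<^sub>C (inverse l ^ K *\<^sub>C Qs l A K x) - A (inverse l ^ K *\<^sub>C Qs l A K x) - x
       = - (inverse l ^ K *\<^sub>C (A ^^ K) x)" by simp
qed

lemma err_left:
  assumes A: "bop A" and l: "l \<noteq> 0"
  shows "(\<lambda>x. inverse l ^ K *\<^sub>C Qs l A K (l *\<^sub>C x - A x) - x)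
       = (\<lambda>x. - (inverse l ^ K *\<^sub>C (A ^^ K) x))"
proof
  fix x
  have il: "inverse l ^ K * l ^ K = 1" using l by (simp add: power_mult_distrib[symmetric])
  have "inverse l ^ K *\<^sub>C Qs l A K (l *\<^sub>C x - A x) = inverse l ^ K *\<^sub>C (l ^ K *\<^sub>C x - (A ^^ K) x)"
    by (simp add: Qs_ident2[OF A])
  also have "\<dots> = x - inverse l ^ K *\<^sub>C (A ^^ K) x" by (simp add: scaleC_diff_right scaleC_scaleC il scaleC_one)
  finally show "inverse l ^ K *\<^sub>C Qs l A K (l *\<^sub>C x - A x) - x = - (inverse l ^ K *\<^sub>C (A ^^ K) x)" by simp
qed

lemma onorm_Qs:
  assumes A: "bop A"
  shows "onorm (Qs l A K) \<le> (\<Sum>s<K. cmod l ^ (K - 1 - s) * onorm (A ^^ s))"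
proof -
  have "onorm (Qs l A K) = onorm (\<lambda>x. \<Sum>s<K. l ^ (K - 1 - s) *\<^sub>C (A ^^ s) x)" by (simp add: Qs_def[abs_def])
  also have "\<dots> \<le> (\<Sum>s<K. onorm (\<lambda>x. l ^ (K - 1 - s) *\<^sub>C (A ^^ s) x))"
    by (rule onorm_sum) (auto intro: bopD1 bop_scale bop_pow A)
  also have "\<dots> \<le> (\<Sum>s<K. cmod l ^ (K - 1 - s) * onorm (A ^^ s))"
  proof (rule sum_mono)
    fix s
    show "onorm (\<lambda>x. l ^ (K - 1 - s) *\<^sub>C (A ^^ s) x) \<le> cmod l ^ (K - 1 - s) * onorm (A ^^ s)"
      using onorm_scaleC_le[OF bopD1[OF bop_pow[OF A]], of "l ^ (K - 1 - s)" s] by (simp add: norm_power)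
  qed
  finally show ?thesis .
qed


lemma ar1: "0 < (t::real) \<Longrightarrow> s < K \<Longrightarrow> (1/t) ^ K * t ^ (K - 1 - s) = (1/t) ^ (s + 1)"
proof -
  assume t: "0 < t" and s: "s < K"
  have "K = (K - 1 - s) + (s + 1)" using s by simp
  then have "(1/t) ^ K = (1/t) ^ (K - 1 - s) * (1/t) ^ (s + 1)" by (metis power_add)
  then show ?thesis using t by (simp add: power_one_over)
qed

lemma ar2: "0 < (t::real) \<Longrightarrow> (1/t) ^ (i * N + u + 1) * ((t ^ N / 2) ^ i * B ^ u) = (1/2) ^ i * ((1/t) ^ (u + 1) * B ^ u)"
proof -
  assume t: "0 < t"
  have f1: "(1/t) ^ (i * N + u + 1) = ((1/t) ^ N) ^ i * (1/t) ^ (u + 1)"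
    by (simp add: power_add power_mult mult.commute[of i N])
  have f2: "((1/t) ^ N) ^ i * (t ^ N / 2) ^ i = (1/2) ^ i"
  proof -
    have "(1/t) ^ N * (t ^ N / 2) = 1/2" using t by (simp add: power_one_over)
    then show ?thesis by (simp only: power_mult_distrib[symmetric])
  qed
  have "(1/t) ^ (i * N + u + 1) * ((t ^ N / 2) ^ i * B ^ u)
      = (((1/t) ^ N) ^ i * (t ^ N / 2) ^ i) * ((1/t) ^ (u + 1) * B ^ u)"
    unfolding f1 by (simp only: mult_ac)
  then show ?thesis by (simp only: f2)
qed

lemma ar3:
  assumes t: "0 < (t::real)" and h: "0 < h"
  shows "(1/t) ^ (nat \<lceil>1/h\<rceil> * N) * (t ^ N / 2) ^ nat \<lceil>1/h\<rceil> \<le> h"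
proof -
  define q where "q = nat \<lceil>1/h\<rceil>"
  have "(1/t) ^ (q * N) * (t ^ N / 2) ^ q = ((1/t) ^ N * (t ^ N / 2)) ^ q"
    by (simp only: power_mult_distrib mult.commute[of q N] power_mult)
  also have "(1/t) ^ N * (t ^ N / 2) = 1/2" using t by (simp add: power_one_over)
  finally have e: "(1/t) ^ (q * N) * (t ^ N / 2) ^ q = (1/2) ^ q" .
  have q1: "1/h \<le> real q" unfolding q_def by (rule real_nat_ceiling_ge)
  have "real q < 2 ^ q" using less_exp[of q] by (metis of_nat_less_iff of_nat_numeral of_nat_power)
  then have "1/h < 2 ^ q" using q1 by linarith
  then have "1 / 2 ^ q < h" using h by (simp add: field_simps)
  then show ?thesis using e by (simp add: q_def power_one_over)
qed

lemma forward_nonzero: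
  fixes U :: "real \<Rightarrow> 'a::complex_normed_vector \<Rightarrow> 'a" and l :: complex
  assumes U: "Cb U" and qn: "asymp_quasinilpotent U" and l: "l \<noteq> 0"
  shows "l \<in> asymp_resolvent_set U"
proof -
  define t where "t = cmod l"
  have t: "0 < t" using l by (simp add: t_def)
  have famU: "fam U" by (rule Cb_fam[OF U])
  have "eventually (\<lambda>n. root n (pn (\<lambda>h. U h ^^ n)) < t/2) sequentially"
    using qn t unfolding pn_pow_Limsup by (intro order_tendstoD(2)) auto
  then obtain k0 where k0: "\<And>n. n \<ge> k0 \<Longrightarrow> root n (pn (\<lambda>h. U h ^^ n)) < t/2"
    by (auto simp: eventually_sequentially)
  define N where "N = Suc k0"
  have N1: "1 \<le> N" "0 < N" by (simp_all add: N_def)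
  define p where "p = pn (\<lambda>h. U h ^^ N)"
  have rN: "root N p < t/2" unfolding p_def by (rule k0) (simp add: N_def)
  have p0: "0 \<le> p" unfolding p_def by (rule pn_nonneg[OF fam_pow[OF famU]])
  have "p = root N p ^ N" using p0 N1 by (simp add: real_root_pow_pos2)
  also have "\<dots> < (t/2) ^ N" using rN p0 N1 by (intro power_strict_mono) (auto simp: real_root_ge_zero)
  also have "\<dots> \<le> t ^ N / 2"
  proof -
    have "(2::real) ^ 1 \<le> 2 ^ N" using N1 by (intro power_increasing) auto
    then have "t ^ N / 2 ^ N \<le> t ^ N / 2" using t by (intro divide_left_mono) auto
    then show ?thesis by (simp add: power_divide)
  qed
  finally have pN: "p < t ^ N / 2" .
  have evN: "eventually (\<lambda>h. onorm (U h ^^ N) < t ^ N / 2) (at_right 0)"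
    using pn_ev[OF fam_pow[OF famU], of "t ^ N / 2 - p" N] pN unfolding p_def by simp
  have "eventually (\<lambda>h. h \<in> {0<..1} \<and> onorm (U h ^^ N) < t ^ N / 2) (at_right 0)"
    using ev01 evN by (rule eventually_conj)
  then obtain b where b0: "b > 0" and b: "\<And>h. h > 0 \<Longrightarrow> h < b \<Longrightarrow> h \<in> {0<..1} \<and> onorm (U h ^^ N) < t ^ N / 2"
    unfolding eventually_at_right_field by blast
  define \<delta> where "\<delta> = min b 1"
  have \<delta>: "0 < \<delta>" using b0 by (simp add: \<delta>_def)
  have bopU: "bop (U h)" if "h \<in> {0<..1}" for h using U that by (simp add: Cb_def)
  have h\<delta>: "h \<in> {0<..1}" "onorm (U h ^^ N) \<le> t ^ N / 2" if "0 < h" "h < \<delta>" for h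
    using b[of h] that by (auto simp: \<delta>_def)
  obtain B0 where B0: "\<forall>h\<in>{0<..1}. onorm (U h) \<le> B0"
    using U unfolding Cb_def bdd_above_def by auto
  define B where "B = max B0 0"
  have B: "\<And>h. h \<in> {0<..1} \<Longrightarrow> onorm (U h) \<le> B" "0 \<le> B" using B0 by (auto simp: B_def le_max_iff_disj)
  define q where "q = (\<lambda>h::real. nat \<lceil>1/h\<rceil>)"
  define K where "K = (\<lambda>h. q h * N)"
  define c where "c = (\<lambda>h. inverse l ^ K h)"
  have cc: "cmod (c h) = (1/t) ^ K h" for h unfolding c_def t_def by (simp add: norm_power norm_divide power_one_over inverse_eq_divide)
  define R where "R = (\<lambda>h. if h < \<delta> then (\<lambda>x. c h *\<^sub>C Qs l (U h) (K h) x) else (\<lambda>x::'a. 0))"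
  define C where "C = 2 * (\<Sum>u<N. (1/t) ^ (u + 1) * B ^ u)"
  have C0: "0 \<le> C" unfolding C_def using t B(2) by (intro mult_nonneg_nonneg sum_nonneg) auto
  have small: "R h = (\<lambda>x. c h *\<^sub>C Qs l (U h) (K h) x)" if "h < \<delta>" for h using that by (simp add: R_def)
  have Rprop: "bop (R h) \<and> onorm (R h) \<le> C" if h: "h \<in> {0<..1}" for h
  proof (cases "h < \<delta>")
    case False
    then show ?thesis using C0 by (simp add: R_def bop_zero onorm_zero)
  next
    case True
    define A where "A = U h"
    have A: "bop A" unfolding A_def by (rule bopU[OF h])
    have bQ: "bop (\<lambda>x. c h *\<^sub>C Qs l A (K h) x)" by (rule bop_scale[OF bop_Qs[OF A]])
    have "onorm (\<lambda>x. c h *\<^sub>C Qs l A (K h) x) \<le> cmod (c h) * onorm (Qs l A (K h))"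
      by (rule onorm_scaleC_le[OF bopD1[OF bop_Qs[OF A]]])
    also have "\<dots> \<le> (1/t) ^ K h * (\<Sum>s<K h. t ^ (K h - 1 - s) * onorm (A ^^ s))"
      unfolding cc using onorm_Qs[OF A, of l "K h"] t by (intro mult_left_mono) (auto simp: t_def)
    also have "\<dots> = (\<Sum>s<K h. (1/t) ^ (s + 1) * onorm (A ^^ s))"
      unfolding sum_distrib_left
    proof (rule sum.cong[OF refl])
      fix s assume "s \<in> {..<K h}"
      then have s: "s < K h" by simp
      show "(1/t) ^ K h * (t ^ (K h - 1 - s) * onorm (A ^^ s)) = (1/t) ^ (s + 1) * onorm (A ^^ s)"
        using ar1[OF t s] by (simp only: mult.assoc[symmetric])
    qed
    also have "\<dots> \<le> C" unfolding C_def K_def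
    proof (rule block_sum)
      fix i u assume u: "u < N"
      have "(A ^^ (i * N + u)) = (A ^^ N) ^^ i \<circ> A ^^ u"
        by (simp add: funpow_add funpow_mult mult.commute[of i N])
      then have "onorm (A ^^ (i * N + u)) \<le> onorm ((A ^^ N) ^^ i) * onorm (A ^^ u)"
        by (simp only:) (rule onorm_compose[OF bopD1[OF bop_pow[OF bop_pow[OF A]]] bopD1[OF bop_pow[OF A]]])
      also have "\<dots> \<le> onorm (A ^^ N) ^ i * onorm A ^ u"
        by (intro mult_mono onorm_pow bop_pow A onorm_pos_le bopD1 zero_le_power)
      also have "\<dots> \<le> (t ^ N / 2) ^ i * B ^ u"
      proof (intro mult_mono power_mono)
        show "onorm (A ^^ N) \<le> t ^ N / 2" using h\<delta>(2)[of h] True h by (simp add: A_def)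
        show "onorm A \<le> B" using B(1)[OF h] by (simp add: A_def)
      qed (use t in \<open>auto intro: onorm_pos_le bopD1 bop_pow A B(2) zero_le_power\<close>)
      finally have o: "onorm (A ^^ (i * N + u)) \<le> (t ^ N / 2) ^ i * B ^ u" .
      have "(1/t) ^ (i * N + u + 1) * onorm (A ^^ (i * N + u)) \<le> (1/t) ^ (i * N + u + 1) * ((t ^ N / 2) ^ i * B ^ u)"
        using t by (intro mult_left_mono[OF o]) auto
      also have "\<dots> = (1/2) ^ i * ((1/t) ^ (u + 1) * B ^ u)" by (rule ar2[OF t])
      finally show "(1/t) ^ (i * N + u + 1) * onorm (A ^^ (i * N + u)) \<le> (1/2) ^ i * ((1/t) ^ (u + 1) * B ^ u)" .
    next
      fix u show "0 \<le> (1/t) ^ (u + 1) * B ^ u" using t B(2) by simp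
    qed
    finally show ?thesis using small[OF True] bQ by (simp add: A_def)
  qed
  have CbR: "Cb R"
    unfolding Cb_def bdd_above_def using Rprop by blast
  have errb: "onorm (\<lambda>x. - (c h *\<^sub>C (U h ^^ K h) x)) \<le> h \<and> 0 \<le> onorm (\<lambda>x. - (c h *\<^sub>C (U h ^^ K h) x))"
    if h: "0 < h" "h < \<delta>" for h
  proof -
    have h1: "h \<in> {0<..1}" by (rule h\<delta>(1)[OF h])
    have A: "bop (U h)" by (rule bopU[OF h1])
    have bl: "bounded_linear (\<lambda>x. c h *\<^sub>C (U h ^^ K h) x)" by (rule bopD1[OF bop_scale[OF bop_pow[OF A]]])
    have "onorm (\<lambda>x. - (c h *\<^sub>C (U h ^^ K h) x)) = onorm (\<lambda>x. c h *\<^sub>C (U h ^^ K h) x)"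
      by (rule onorm_neg)
    also have "\<dots> \<le> cmod (c h) * onorm (U h ^^ K h)"
      by (rule onorm_scaleC_le[OF bopD1[OF bop_pow[OF A]]])
    also have "onorm (U h ^^ K h) = onorm ((U h ^^ N) ^^ q h)" by (simp add: K_def funpow_mult mult.commute)
    also have "\<dots> \<le> onorm (U h ^^ N) ^ q h" by (rule onorm_pow[OF bop_pow[OF A]])
    also have "\<dots> \<le> (t ^ N / 2) ^ q h"
      by (intro power_mono h\<delta>(2)[OF h] onorm_pos_le bopD1 bop_pow A)
    finally have "onorm (\<lambda>x. - (c h *\<^sub>C (U h ^^ K h) x)) \<le> (1/t) ^ K h * (t ^ N / 2) ^ q h"
      using t by (simp add: cc mult_left_mono)
    also have "\<dots> \<le> h" unfolding K_def q_def by (rule ar3[OF t h(1)])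
    finally show ?thesis using onorm_pos_le[OF bounded_linear_minus[OF bl]] by simp
  qed
  have evd: "eventually (\<lambda>h. 0 < h \<and> h < \<delta>) (at_right (0::real))"
    by (rule eventually_at_rightI[where b=\<delta>]) (use \<delta> in auto)
  have lim1: "((\<lambda>h. onorm (\<lambda>x. l *\<^sub>C R h x - U h (R h x) - x)) \<longlongrightarrow> 0) (at_right 0)"
  proof (rule tendsto_by_bound)
    show "eventually (\<lambda>h. 0 \<le> onorm (\<lambda>x. l *\<^sub>C R h x - U h (R h x) - x) \<and> onorm (\<lambda>x. l *\<^sub>C R h x - U h (R h x) - x) \<le> h) (at_right 0)"
      using evd
    proof (rule eventually_mono)
      fix h assume h: "0 < h \<and> h < \<delta>"
      have A: "bop (U h)" by (rule bopU[OF h\<delta>(1)]) (use h in auto)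
      have "(\<lambda>x. l *\<^sub>C R h x - U h (R h x) - x) = (\<lambda>x. - (c h *\<^sub>C (U h ^^ K h) x))"
        using err_right[OF A l, of "K h"] small[of h] h by (simp add: c_def)
      then show "0 \<le> onorm (\<lambda>x. l *\<^sub>C R h x - U h (R h x) - x) \<and> onorm (\<lambda>x. l *\<^sub>C R h x - U h (R h x) - x) \<le> h"
        using errb[of h] h by simp
    qed
  qed
  have lim2: "((\<lambda>h. onorm (\<lambda>x. R h (l *\<^sub>C x - U h x) - x)) \<longlongrightarrow> 0) (at_right 0)"
  proof (rule tendsto_by_bound)
    show "eventually (\<lambda>h. 0 \<le> onorm (\<lambda>x. R h (l *\<^sub>C x - U h x) - x) \<and> onorm (\<lambda>x. R h (l *\<^sub>C x - U h x) - x) \<le> h) (at_right 0)"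
      using evd
    proof (rule eventually_mono)
      fix h assume h: "0 < h \<and> h < \<delta>"
      have A: "bop (U h)" by (rule bopU[OF h\<delta>(1)]) (use h in auto)
      have "(\<lambda>x. R h (l *\<^sub>C x - U h x) - x) = (\<lambda>x. - (c h *\<^sub>C (U h ^^ K h) x))"
        using err_left[OF A l, of "K h"] small[of h] h by (simp add: c_def)
      then show "0 \<le> onorm (\<lambda>x. R h (l *\<^sub>C x - U h x) - x) \<and> onorm (\<lambda>x. R h (l *\<^sub>C x - U h x) - x) \<le> h"
        using errb[of h] h by simp
    qed
  qed
  show ?thesis unfolding asymp_resolvent_set_def using CbR lim1 lim2 by blast
qed


theorem theorem29:
  fixes U :: "real \<Rightarrow> 'a::complex_banach \<Rightarrow> 'a"
  assumes "\<exists>x::'a. x \<noteq> 0"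
    and "Cb U"
  shows "asymp_quasinilpotent U \<longleftrightarrow> asymp_spectrum U = {0}"
proof
  assume qn: "asymp_quasinilpotent U"
  obtain x0 :: 'a where x0: "x0 \<noteq> 0" using assms(1) by blast
  have z: "0 \<notin> asymp_resolvent_set U" by (rule forward_zero[OF assms(2) x0 qn])
  have nz: "l \<in> asymp_resolvent_set U" if "l \<noteq> 0" for l by (rule forward_nonzero[OF assms(2) qn that])
  show "asymp_spectrum U = {0}"
    unfolding asymp_spectrum_def using z nz by blast
next
  assume sp: "asymp_spectrum U = {0}"
  have res: "l \<in> asymp_resolvent_set U" if "l \<noteq> 0" for l
    using sp that unfolding asymp_spectrum_def by blast
  have "\<forall>l. \<exists>R. l \<noteq> 0 \<longrightarrow> (Cb R \<and>
     ((\<lambda>h. onorm (\<lambda>x. (l *\<^sub>C R h x - U h (R h x)) - x)) \<longlongrightarrow> 0) (at_right 0) \<and>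
     ((\<lambda>h. onorm (\<lambda>x. R h (l *\<^sub>C x - U h x) - x)) \<longlongrightarrow> 0) (at_right 0))"
  proof
    fix l
    show "\<exists>R. l \<noteq> 0 \<longrightarrow> (Cb R \<and>
     ((\<lambda>h. onorm (\<lambda>x. (l *\<^sub>C R h x - U h (R h x)) - x)) \<longlongrightarrow> 0) (at_right 0) \<and>
     ((\<lambda>h. onorm (\<lambda>x. R h (l *\<^sub>C x - U h x) - x)) \<longlongrightarrow> 0) (at_right 0))"
    proof (cases "l = 0")
      case True then show ?thesis by blast
    next
      case False
      then have "l \<in> asymp_resolvent_set U" by (rule res)
      then show ?thesis unfolding asymp_resolvent_set_def by blast
    qed
  qed
  then obtain Rs where Rs: "\<forall>l. l \<noteq> 0 \<longrightarrow> (Cb (Rs l) \<and>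
     ((\<lambda>h. onorm (\<lambda>x. (l *\<^sub>C Rs l h x - U h (Rs l h x)) - x)) \<longlongrightarrow> 0) (at_right 0) \<and>
     ((\<lambda>h. onorm (\<lambda>x. Rs l h (l *\<^sub>C x - U h x) - x)) \<longlongrightarrow> 0) (at_right 0))"
    by (rule exE[OF choice])
  have R1: "Cb (Rs l)" if "l \<noteq> 0" for l using spec[OF Rs, of l] that by simp
  have R2: "((\<lambda>h. onorm (\<lambda>x. l *\<^sub>C Rs l h x - U h (Rs l h x) - x)) \<longlongrightarrow> 0) (at_right 0)"
    if "l \<noteq> 0" for l using spec[OF Rs, of l] that by simp
  have R3: "((\<lambda>h. onorm (\<lambda>x. Rs l h (l *\<^sub>C x - U h x) - x)) \<longlongrightarrow> 0) (at_right 0)"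
    if "l \<noteq> 0" for l using spec[OF Rs, of l] that by simp
  interpret resolv U Rs
  proof
    show "Cb U" by (rule assms(2))
  qed (auto intro: R1 R2 R3)
  show "asymp_quasinilpotent U" by (rule quasinil)
qed

end
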